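(* Let $\Omega\subseteq\mathbb{R}^2$ be a bounded, simply connected domain of class $C^2$, $a_1,\ldots,a_p$ distinct points in $\Omega$, and $\{L_1,\ldots,L_q\}$ a minimal connection for $\{a_1,\ldots,a_p\}$ relative to $\Omega$. For any set $A\subseteq\Omega$ of finite perimeter, $\partial^*A$ has only finitely many essential arcs.
   Context: Connections: a connection for $\{a_1,\ldots,a_p\}$ relative to $\Omega$ is a finite family of closed non-degenerate segments $L_j\subseteq\overline\Omega$, each joining two of the $a_i$ or some $a_i$ to a point of $\partial\Omega$, with each $a_i$ an endpoint of an odd number of $L_j$; a minimal one minimises total length. $\partial^*A$ is the essential boundary. Arcs: for $A\subseteq\Omega$ of finite perimeter, fix a decomposition $\partial^*A=\bigcup_{i\geq0}C_i\mod\mathcal{H}^1$ into countably many rectifiable Jordan curves with $P(A,\mathbb{R}^2)=\sum_i\mathcal{H}^1(C_i)$ (such a decomposition exists by Ambrosio–Caselles–Masnou–Morel), and Lipschitz parametrisations $\gamma_i\colon[0,1]\to\overline\Omega$ of $C_i$, injective on $[0,1)$, with $\gamma_i(0)=\gamma_i(1)$. Write $\gamma_i^{-1}(\Omega\setminus\bigcup_jL_j)$ as a countable disjoint union of relatively open intervals $I_{ik}$ of $[0,1]$ (where an interval containing $0$ and $1$ is treated as a single interval of the form $[0,a)\cup(b,1]$, or all of $[0,1]$). The arcs of $\partial^*A$ are the sets $\Gamma_{ik}:=\gamma_i(\overline{I_{ik}})$. An arc is essential if it is not a closed curve and either its endpoints lie on two distinct segments $L_j\neq L_k$, or one endpoint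 lies on $\partial\Omega$ and the other lies on a segment $L_j$ that does not touch $\partial\Omega$. *)

theory Defs
  imports "HOL-Analysis.Analysis"
begin

type_synonym pt = "real^2"

definition C2_real :: "(real \<Rightarrow> real) \<Rightarrow> bool" where
  "C2_real f \<longleftrightarrow> (\<exists>f' f''. (\<forall>t. (f has_real_derivative f' t) (at t)) \<and>
                         (\<forall>t. (f' has_real_derivative f'' t) (at t)) \<and> continuous_on UNIV f'')"

definition C2_boundary :: "pt set \<Rightarrow> bool" where
  "C2_boundary \<Omega> \<longleftrightarrow> (\<forall>x0\<in>frontier \<Omega>. \<exists>R f r h.
      orthogonal_transformation R \<and> C2_real f \<and> f 0 = 0 \<and> r > 0 \<and> h > 0 \<and>
      (\<forall>y::pt. \<bar>y$1\<bar> < r \<and> \<bar>y$2\<bar> < h \<longrightarrow> (x0 + R y \<in> \<Omega> \<longleftrightarrow> y$2 > f (y$1))))"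

definition C2_domain :: "pt set \<Rightarrow> bool" where
  "C2_domain \<Omega> \<longleftrightarrow> open \<Omega> \<and> connected \<Omega> \<and> \<Omega> \<noteq> {} \<and> C2_boundary \<Omega>"

text \<open>A connection is a finite family of segments L j = closed_segment (P j) (Q j), j < q.\<close>
definition connection ::
  "pt set \<Rightarrow> (nat \<Rightarrow> pt) \<Rightarrow> nat \<Rightarrow> nat \<Rightarrow> (nat \<Rightarrow> pt) \<Rightarrow> (nat \<Rightarrow> pt) \<Rightarrow> bool" where
  "connection \<Omega> a p q P Q \<longleftrightarrow>
     (\<forall>j<q. P j \<noteq> Q j \<and> closed_segment (P j) (Q j) \<subseteq> closure \<Omega> \<and>
        ((\<exists>i<p. \<exists>i'<p. {P j, Q j} = {a i, a i'}) \<or>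
         (\<exists>i<p. \<exists>b\<in>frontier \<Omega>. {P j, Q j} = {a i, b}))) \<and>
     (\<forall>i<p. odd (card {j. j < q \<and> a i \<in> {P j, Q j}}))"

definition conn_length :: "nat \<Rightarrow> (nat \<Rightarrow> pt) \<Rightarrow> (nat \<Rightarrow> pt) \<Rightarrow> real" where
  "conn_length q P Q = (\<Sum>j<q. dist (P j) (Q j))"

definition minimal_connection ::
  "pt set \<Rightarrow> (nat \<Rightarrow> pt) \<Rightarrow> nat \<Rightarrow> nat \<Rightarrow> (nat \<Rightarrow> pt) \<Rightarrow> (nat \<Rightarrow> pt) \<Rightarrow> bool" where
  "minimal_connection \<Omega> a p q P Q \<longleftrightarrow> connection \<Omega> a p q P Q \<and>
     (\<forall>q' P' Q'. connection \<Omega> a p q' P' Q' \<longrightarrow> conn_length q P Q \<le> conn_length q' P' Q')"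

definition hausdorff1 :: "pt set \<Rightarrow> ennreal" where
  "hausdorff1 S = (SUP \<delta>\<in>{0<..}.
      INF C\<in>{C :: nat \<Rightarrow> pt set. S \<subseteq> (\<Union>n. C n) \<and> (\<forall>n. bounded (C n) \<and> diameter (C n) \<le> \<delta>)}.
        (\<Sum>n. ennreal (diameter (C n))))"

definition test_field :: "(pt \<Rightarrow> pt) \<Rightarrow> (pt \<Rightarrow> pt \<Rightarrow> pt) \<Rightarrow> bool" where
  "test_field \<phi> \<phi>' \<longleftrightarrow> (\<forall>x. (\<phi> has_derivative \<phi>' x) (at x)) \<and>
     (\<forall>i j. continuous_on UNIV (\<lambda>x. \<phi>' x (axis i 1) $ j)) \<and>
     compact (closure {x. \<phi> x \<noteq> 0}) \<and> (\<forall>x. norm (\<phi> x) \<le> 1)"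

definition divergence :: "(pt \<Rightarrow> pt \<Rightarrow> pt) \<Rightarrow> pt \<Rightarrow> real" where
  "divergence \<phi>' x = (\<Sum>i\<in>UNIV. \<phi>' x (axis i 1) $ i)"

definition perimeter :: "pt set \<Rightarrow> ennreal" where
  "perimeter A = (SUP (\<phi>, \<phi>')\<in>{(\<phi>, \<phi>'). test_field \<phi> \<phi>'}.
       ennreal (integral A (divergence \<phi>')))"

definition finite_perimeter :: "pt set \<Rightarrow> bool" where
  "finite_perimeter A \<longleftrightarrow> A \<in> sets lebesgue \<and> perimeter A < \<infinity>"

definition density_ratio :: "pt set \<Rightarrow> pt \<Rightarrow> real \<Rightarrow> real" where
  "density_ratio A x r = measure lebesgue (A \<inter> ball x r) / measure lebesgue (ball x r)"

definition essential_boundary :: "pt set \<Rightarrow> pt set" where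
  "essential_boundary A = {x. \<not> ((density_ratio A x \<longlongrightarrow> 0) (at_right 0)) \<and>
                              \<not> ((density_ratio A x \<longlongrightarrow> 1) (at_right 0))}"

definition jordan_decomposition ::
  "pt set \<Rightarrow> pt set \<Rightarrow> nat set \<Rightarrow> (nat \<Rightarrow> pt set) \<Rightarrow> (nat \<Rightarrow> real \<Rightarrow> pt) \<Rightarrow> bool" where
  "jordan_decomposition \<Omega> A I C \<gamma> \<longleftrightarrow>
     (\<forall>i\<in>I. C i = \<gamma> i ` {0..1} \<and> \<gamma> i ` {0..1} \<subseteq> closure \<Omega> \<and>
            (\<exists>B. B-lipschitz_on {0..1} (\<gamma> i)) \<and>
            inj_on (\<gamma> i) {0..<1} \<and> \<gamma> i 0 = \<gamma> i 1) \<and>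
     hausdorff1 ((essential_boundary A - (\<Union>i\<in>I. C i)) \<union> ((\<Union>i\<in>I. C i) - essential_boundary A)) = 0 \<and>
     perimeter A = (\<Sum>i. if i \<in> I then hausdorff1 (C i) else 0)"

definition seg_union :: "nat \<Rightarrow> (nat \<Rightarrow> pt) \<Rightarrow> (nat \<Rightarrow> pt) \<Rightarrow> pt set" where
  "seg_union q P Q = (\<Union>j<q. closed_segment (P j) (Q j))"

definition arc_params :: "pt set \<Rightarrow> nat \<Rightarrow> (nat \<Rightarrow> pt) \<Rightarrow> (nat \<Rightarrow> pt) \<Rightarrow> (real \<Rightarrow> pt) \<Rightarrow> real set" where
  "arc_params \<Omega> q P Q g = {t\<in>{0..1}. g t \<in> \<Omega> - seg_union q P Q}"

text \<open>The interval I_ik containing parameter t: a connected component of the parameter set,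
  where the components containing 0 and 1 are merged (wrap-around).\<close>
definition arc_interval :: "real set \<Rightarrow> real \<Rightarrow> real set" where
  "arc_interval U t =
     (if 0 \<in> connected_component_set U t \<or> 1 \<in> connected_component_set U t
      then connected_component_set U 0 \<union> connected_component_set U 1
      else connected_component_set U t)"

text \<open>Endpoints of the arc gamma(closure J): the images of closure J - J
  (empty iff J = [0,1]; a single point iff the arc closes up).\<close>
definition arc_endpoints :: "(real \<Rightarrow> pt) \<Rightarrow> real set \<Rightarrow> pt set" where
  "arc_endpoints g J = g ` (closure J - J)"

definition essential_arc ::
  "pt set \<Rightarrow> nat \<Rightarrow> (nat \<Rightarrow> pt) \<Rightarrow> (nat \<Rightarrow> pt) \<Rightarrow> (real \<Rightarrow> pt) \<Rightarrow> real set \<Rightarrow> bool" where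
  "essential_arc \<Omega> q P Q g J \<longleftrightarrow> (\<exists>e1 e2. arc_endpoints g J = {e1, e2} \<and> e1 \<noteq> e2 \<and>
     ((\<exists>j<q. \<exists>k<q. closed_segment (P j) (Q j) \<noteq> closed_segment (P k) (Q k) \<and>
                   e1 \<in> closed_segment (P j) (Q j) \<and> e2 \<in> closed_segment (P k) (Q k)) \<or>
      (e1 \<in> frontier \<Omega> \<and> (\<exists>j<q. e2 \<in> closed_segment (P j) (Q j) \<and>
                                closed_segment (P j) (Q j) \<inter> frontier \<Omega> = {}))))"

definition essential_arcs ::
  "pt set \<Rightarrow> nat \<Rightarrow> (nat \<Rightarrow> pt) \<Rightarrow> (nat \<Rightarrow> pt) \<Rightarrow> nat set \<Rightarrow> (nat \<Rightarrow> real \<Rightarrow> pt) \<Rightarrow> (nat \<times> real set) set" where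
  "essential_arcs \<Omega> q P Q I \<gamma> =
     {(i, arc_interval (arc_params \<Omega> q P Q (\<gamma> i)) t) | i t.
        i \<in> I \<and> t \<in> arc_params \<Omega> q P Q (\<gamma> i) \<and>
        essential_arc \<Omega> q P Q (\<gamma> i) (arc_interval (arc_params \<Omega> q P Q (\<gamma> i)) t)}"

end

theory Submission
  imports Defs
begin

lemma first_exit:
  fixes u c :: "'a::euclidean_space"
  assumes "open \<Omega>" "u \<in> \<Omega>" "c \<notin> \<Omega>"
  shows "\<exists>b\<in>frontier \<Omega>. closed_segment u b \<subseteq> closure \<Omega> \<and> dist u b \<le> dist u c"
proof -
  define F where "F = closed_segment u c - \<Omega>"
  have "closed F" unfolding F_def using assms(1) by (simp add: closed_Diff)
  moreover have "c \<in> F" using assms by (simp add: F_def)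
  ultimately obtain b where bF: "b \<in> F" and bmin: "\<And>y. y \<in> F \<Longrightarrow> dist u b \<le> dist u y"
    using distance_attains_inf[of F u] by blast
  have bseg: "b \<in> closed_segment u c" and bn: "b \<notin> \<Omega>" using bF by (auto simp: F_def)
  have ub: "u \<noteq> b" using assms bn by auto
  have sub: "closed_segment u b \<subseteq> closed_segment u c"
    using bseg by (simp add: subset_closed_segment)
  have os: "open_segment u b \<subseteq> \<Omega>"
  proof
    fix x assume x: "x \<in> open_segment u b"
    obtain w where w: "0 < w" "w < 1" "x = (1 - w) *\<^sub>R u + w *\<^sub>R b"
      using x by (auto simp: in_segment)
    have "u - x = w *\<^sub>R (u - b)" using w(3) by (simp add: algebra_simps)
    then have "dist u x = w * dist u b" using w(1) by (simp add: dist_norm)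
    then have "dist u x < dist u b" using w ub by simp
    moreover have "x \<in> closed_segment u c" using x sub open_closed_segment by blast
    ultimately show "x \<in> \<Omega>" using bmin F_def by force
  qed
  have "closed_segment u b \<subseteq> closure \<Omega>"
    using closure_mono[OF os] ub by simp
  moreover have "b \<in> frontier \<Omega>"
    using \<open>closed_segment u b \<subseteq> closure \<Omega>\<close> bn assms(1)
    by (simp add: frontier_def interior_open subset_iff)
  ultimately show ?thesis using bmin[OF \<open>c \<in> F\<close>] by blast
qed

lemma T3:
  fixes x P Q R :: "'a::euclidean_space"
  assumes "x \<in> closed_segment P Q" "x \<in> closed_segment P R" "x \<in> closed_segment Q R"
  shows "x = P \<or> x = Q \<or> x = R"
proof (rule ccontr)
  assume ne: "\<not> (x = P \<or> x = Q \<or> x = R)"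
  obtain s where s: "0 \<le> s" "s \<le> 1" "x = (1 - s) *\<^sub>R P + s *\<^sub>R Q" using assms(1) by (auto simp: closed_segment_def)
  obtain t where t: "0 \<le> t" "t \<le> 1" "x = (1 - t) *\<^sub>R P + t *\<^sub>R R" using assms(2) by (auto simp: closed_segment_def)
  obtain r where r: "0 \<le> r" "r \<le> 1" "x = (1 - r) *\<^sub>R Q + r *\<^sub>R R" using assms(3) by (auto simp: closed_segment_def)
  have s0: "s \<noteq> 0" using s ne by auto
  have s1: "s \<noteq> 1" using s ne by auto
  have t0: "t \<noteq> 0" using t ne by auto
  have t1: "t \<noteq> 1" using t ne by auto
  define v where "v = x - P"
  have v0: "v \<noteq> 0" using ne v_def by auto
  have Qe: "Q = P + (1/s) *\<^sub>R v"
  proof -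
    have "v = s *\<^sub>R (Q - P)" using s(3) by (simp add: v_def algebra_simps)
    then have "(1/s) *\<^sub>R v = Q - P" using s0 by simp
    then show ?thesis by simp
  qed
  have Re: "R = P + (1/t) *\<^sub>R v"
  proof -
    have "v = t *\<^sub>R (R - P)" using t(3) by (simp add: v_def algebra_simps)
    then have "(1/t) *\<^sub>R v = R - P" using t0 by simp
    then show ?thesis by simp
  qed
  have "x = P + ((1 - r) / s + r / t) *\<^sub>R v"
    using r(3) unfolding Qe Re by (simp add: algebra_simps)
  moreover have "x = P + 1 *\<^sub>R v" by (simp add: v_def)
  ultimately have "((1 - r) / s + r / t) *\<^sub>R v = 1 *\<^sub>R v" by simp
  then have eq: "(1 - r) / s + r / t = 1" using v0 by (metis scaleR_cancel_right)
  have "1 < 1/s" using s s0 s1 by simp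
  have "1 < 1/t" using t t0 t1 by simp
  have "(1 - r) / s + r / t = (1 - r) * (1/s) + r * (1/t)" by simp
  also have "\<dots> > (1 - r) * 1 + r * 1"
  proof (cases "r = 0")
    case True then show ?thesis using \<open>1 < 1/s\<close> by simp
  next
    case False
    then have "r * 1 < r * (1/t)" using r \<open>1 < 1/t\<close> by (intro mult_strict_left_mono) auto
    moreover have "(1 - r) * 1 \<le> (1 - r) * (1/s)" using r \<open>1 < 1/s\<close> by (intro mult_left_mono) auto
    ultimately show ?thesis by linarith
  qed
  finally show False using eq by simp
qed

definition validseg :: "pt set \<Rightarrow> (nat \<Rightarrow> pt) \<Rightarrow> nat \<Rightarrow> pt \<times> pt \<Rightarrow> bool" where
  "validseg \<Omega> a p s \<longleftrightarrow> fst s \<noteq> snd s \<and> closed_segment (fst s) (snd s) \<subseteq> closure \<Omega> \<and>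
     ((\<exists>i<p. \<exists>i'<p. {fst s, snd s} = {a i, a i'}) \<or> (\<exists>i<p. \<exists>b\<in>frontier \<Omega>. {fst s, snd s} = {a i, b}))"

definition cnt :: "pt \<Rightarrow> (pt \<times> pt) list \<Rightarrow> nat" where
  "cnt x N = length (filter (\<lambda>s. x \<in> {fst s, snd s}) N)"

definition sumd :: "(pt \<times> pt) list \<Rightarrow> real" where
  "sumd N = sum_list (map (\<lambda>s. dist (fst s) (snd s)) N)"

lemma len_filter_upt: "length (filter \<psi> [0..<q]) = card {j. j < q \<and> \<psi> j}"
  by (auto simp: length_filter_conv_card intro!: arg_cong[where f=card])

lemma surgery:
  assumes mc: "minimal_connection \<Omega> a p q P Q" and K: "K \<subseteq> {..<q}"
    and N: "\<forall>s\<in>set N. validseg \<Omega> a p s"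
    and par: "\<forall>i<p. even (cnt (a i) N + card {j\<in>K. a i \<in> {P j, Q j}})"
  shows "(\<Sum>j\<in>K. dist (P j) (Q j)) \<le> sumd N"
proof -
  have conn: "connection \<Omega> a p q P Q" using mc by (simp add: minimal_connection_def)
  define g where "g = (\<lambda>j. (P j, Q j))"
  define xs where "xs = filter (\<lambda>j. j \<notin> K) [0..<q]"
  define L where "L = map g xs @ N"
  define P' where "P' = (\<lambda>j. fst (L!j))"
  define Q' where "Q' = (\<lambda>j. snd (L!j))"
  have setxs: "set xs = {j. j < q \<and> j \<notin> K}" by (auto simp: xs_def)
  have vL: "\<forall>s\<in>set L. validseg \<Omega> a p s"
  proof
    fix s assume "s \<in> set L"
    then consider "s \<in> set N" | j where "j < q" "s = g j" by (auto simp: L_def setxs)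
    then show "validseg \<Omega> a p s"
    proof cases
      case 1 then show ?thesis using N by blast
    next
      case 2 then show ?thesis using conn by (auto simp: validseg_def connection_def g_def)
    qed
  qed
  have cardeq: "card {j. j < length L \<and> x \<in> {P' j, Q' j}} = card {j. j < q \<and> j \<notin> K \<and> x \<in> {P j, Q j}} + cnt x N" for x
  proof -
    have "card {j. j < length L \<and> x \<in> {P' j, Q' j}} = length (filter (\<lambda>s. x \<in> {fst s, snd s}) L)"
      unfolding length_filter_conv_card P'_def Q'_def by (rule refl)
    also have "\<dots> = length (filter (\<lambda>j. j \<notin> K \<and> x \<in> {P j, Q j}) [0..<q]) + cnt x N"
      by (simp add: L_def cnt_def xs_def filter_map o_def g_def filter_filter conj_commute)
    also have "\<dots> = card {j. j < q \<and> j \<notin> K \<and> x \<in> {P j, Q j}} + cnt x N"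
      by (simp add: len_filter_upt)
    finally show ?thesis .
  qed
  have split: "card {j. j < q \<and> x \<in> {P j, Q j}} = card {j. j < q \<and> j \<notin> K \<and> x \<in> {P j, Q j}} + card {j\<in>K. x \<in> {P j, Q j}}" for x
  proof -
    have "{j. j < q \<and> x \<in> {P j, Q j}} = {j. j < q \<and> j \<notin> K \<and> x \<in> {P j, Q j}} \<union> {j\<in>K. x \<in> {P j, Q j}}"
      using K by auto
    moreover have "finite {j\<in>K. x \<in> {P j, Q j}}" by (rule finite_subset[OF _ finite_lessThan[of q]]) (use K in auto)
    ultimately show ?thesis by (subst card_Un_disjoint[symmetric]) auto
  qed
  have cA: "\<forall>j<length L. P' j \<noteq> Q' j \<and> closed_segment (P' j) (Q' j) \<subseteq> closure \<Omega> \<and>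
        ((\<exists>i<p. \<exists>i'<p. {P' j, Q' j} = {a i, a i'}) \<or> (\<exists>i<p. \<exists>b\<in>frontier \<Omega>. {P' j, Q' j} = {a i, b}))"
  proof (intro allI impI)
    fix j assume "j < length L"
    then have "L!j \<in> set L" by simp
    then have "validseg \<Omega> a p (L!j)" using vL by blast
    then show "P' j \<noteq> Q' j \<and> closed_segment (P' j) (Q' j) \<subseteq> closure \<Omega> \<and>
        ((\<exists>i<p. \<exists>i'<p. {P' j, Q' j} = {a i, a i'}) \<or> (\<exists>i<p. \<exists>b\<in>frontier \<Omega>. {P' j, Q' j} = {a i, b}))"
      unfolding validseg_def P'_def Q'_def by blast
  qed
  have cB: "\<forall>i<p. odd (card {j. j < length L \<and> a i \<in> {P' j, Q' j}})"
  proof (intro allI impI)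
    fix i assume i: "i < p"
    have "odd (card {j. j < q \<and> a i \<in> {P j, Q j}})" using conn i by (simp add: connection_def)
    then show "odd (card {j. j < length L \<and> a i \<in> {P' j, Q' j}})"
      using par i cardeq[of "a i"] split[of "a i"] by auto
  qed
  have conn': "connection \<Omega> a p (length L) P' Q'"
    unfolding connection_def using cA cB by blast
  have len': "conn_length (length L) P' Q' = (\<Sum>j\<in>{j. j < q \<and> j \<notin> K}. dist (P j) (Q j)) + sumd N"
  proof -
    have "conn_length (length L) P' Q' = sumd L"
      unfolding conn_length_def sumd_def P'_def Q'_def
      by (simp add: sum_list_sum_nth atLeast0LessThan)
    also have "sumd L = sum_list (map (\<lambda>j. dist (P j) (Q j)) xs) + sumd N"
      by (simp add: sumd_def L_def g_def o_def)
    also have "sum_list (map (\<lambda>j. dist (P j) (Q j)) xs) = (\<Sum>j\<in>{j. j < q \<and> j \<notin> K}. dist (P j) (Q j))"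
      by (simp add: sum_list_distinct_conv_sum_set xs_def setxs[unfolded xs_def])
    finally show ?thesis .
  qed
  have len: "conn_length q P Q = (\<Sum>j\<in>{j. j < q \<and> j \<notin> K}. dist (P j) (Q j)) + (\<Sum>j\<in>K. dist (P j) (Q j))"
  proof -
    have "{..<q} = {j. j < q \<and> j \<notin> K} \<union> K" using K by auto
    then show ?thesis unfolding conn_length_def
      by (subst sum.union_disjoint[symmetric]) (auto intro: finite_subset[OF K])
  qed
  have "conn_length q P Q \<le> conn_length (length L) P' Q'"
    using mc conn' by (simp add: minimal_connection_def)
  then show ?thesis using len len' by simp
qed

definition ind :: "pt \<Rightarrow> pt \<Rightarrow> nat" where "ind x y = (if x = y then 1 else 0)"

lemma frontier_open_disj: "open \<Omega> \<Longrightarrow> x \<in> \<Omega> \<Longrightarrow> x \<notin> frontier \<Omega>"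
  by (simp add: frontier_def interior_open)

lemma link_half:
  assumes "open \<Omega>" "\<forall>i<p. a i \<in> \<Omega>" "i0 < p" "u = a i0" "c \<notin> \<Omega>"
  shows "\<exists>b. validseg \<Omega> a p (u, b) \<and> dist u b \<le> dist u c \<and> (\<forall>i<p. cnt (a i) [(u,b)] = ind (a i) u)"
proof -
  have uO: "u \<in> \<Omega>" using assms by auto
  obtain b where b: "b \<in> frontier \<Omega>" "closed_segment u b \<subseteq> closure \<Omega>" "dist u b \<le> dist u c"
    using first_exit[OF assms(1) uO assms(5)] by blast
  have bn: "b \<notin> \<Omega>" using b(1) assms(1) frontier_open_disj by blast
  have "validseg \<Omega> a p (u, b)"
    unfolding validseg_def using b bn uO assms(3,4) by auto
  moreover have "cnt (a i) [(u,b)] = ind (a i) u" if "i < p" for i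
    using assms(2) that bn by (auto simp: cnt_def ind_def)
  ultimately show ?thesis using b(3) by blast
qed

lemma link:
  assumes oO: "open \<Omega>" and aO: "\<forall>i<p. a i \<in> \<Omega>" and uc: "u \<in> closure \<Omega>" and vc: "v \<in> closure \<Omega>"
    and ug: "u \<in> frontier \<Omega> \<or> (\<exists>i<p. u = a i)" and vg: "v \<in> frontier \<Omega> \<or> (\<exists>i<p. v = a i)"
  shows "\<exists>N. (\<forall>s\<in>set N. validseg \<Omega> a p s) \<and> sumd N \<le> dist u v \<and>
             (\<forall>i<p. even (cnt (a i) N + ind (a i) u + ind (a i) v))"
proof -
  have fnO: "x \<in> frontier \<Omega> \<Longrightarrow> x \<notin> \<Omega>" for x using frontier_open_disj[OF oO] by blast
  have indf: "x \<in> frontier \<Omega> \<Longrightarrow> i < p \<Longrightarrow> ind (a i) x = 0" for x i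
    using fnO aO by (auto simp: ind_def)
  show ?thesis
  proof (cases "u \<in> frontier \<Omega>")
    case uf: True
    show ?thesis
    proof (cases "v \<in> frontier \<Omega>")
      case True
      then show ?thesis using uf indf
        by (intro exI[of _ "[]"]) (auto simp: sumd_def cnt_def)
    next
      case False
      then obtain i1 where i1: "i1 < p" "v = a i1" using vg by auto
      obtain b where b: "validseg \<Omega> a p (v, b)" "dist v b \<le> dist v u" "\<forall>i<p. cnt (a i) [(v,b)] = ind (a i) v"
        using link_half[OF oO aO i1 fnO[OF uf]] by blast
      show ?thesis using b uf indf
        by (intro exI[of _ "[(v,b)]"]) (auto simp: sumd_def dist_commute)
    qed
  next
    case uf: False
    then obtain i0 where i0: "i0 < p" "u = a i0" using ug by auto
    show ?thesis
    proof (cases "v \<in> frontier \<Omega>")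
      case True
      obtain b where b: "validseg \<Omega> a p (u, b)" "dist u b \<le> dist u v" "\<forall>i<p. cnt (a i) [(u,b)] = ind (a i) u"
        using link_half[OF oO aO i0 fnO[OF True]] by blast
      show ?thesis using b True indf
        by (intro exI[of _ "[(u,b)]"]) (auto simp: sumd_def dist_commute)
    next
      case False
      then obtain i1 where i1: "i1 < p" "v = a i1" using vg by auto
      show ?thesis
      proof (cases "u = v")
        case True
        then show ?thesis by (intro exI[of _ "[]"]) (auto simp: sumd_def cnt_def)
      next
        case uv: False
        show ?thesis
        proof (cases "closed_segment u v \<subseteq> closure \<Omega>")
          case True
          have "validseg \<Omega> a p (u, v)" unfolding validseg_def using True uv i0 i1 by auto
          moreover have "cnt (a i) [(u,v)] = ind (a i) u + ind (a i) v" for i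
            using uv by (auto simp: cnt_def ind_def)
          ultimately show ?thesis
            by (intro exI[of _ "[(u,v)]"]) (auto simp: sumd_def)
        next
          case False
          then obtain w where w: "w \<in> closed_segment u v" "w \<notin> closure \<Omega>" by auto
          have wn: "w \<notin> \<Omega>" using w(2) closure_subset by blast
          obtain b1 where b1: "validseg \<Omega> a p (u, b1)" "dist u b1 \<le> dist u w" "\<forall>i<p. cnt (a i) [(u,b1)] = ind (a i) u"
            using link_half[OF oO aO i0 wn] by blast
          obtain b2 where b2: "validseg \<Omega> a p (v, b2)" "dist v b2 \<le> dist v w" "\<forall>i<p. cnt (a i) [(v,b2)] = ind (a i) v"
            using link_half[OF oO aO i1 wn] by blast
          have "dist u v = dist u w + dist w v"
            using w(1) by (metis between between_mem_segment)
          then have "sumd [(u,b1),(v,b2)] \<le> dist u v" using b1(2) b2(2) by (simp add: sumd_def dist_commute)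
          moreover have "cnt (a i) [(u,b1),(v,b2)] = cnt (a i) [(u,b1)] + cnt (a i) [(v,b2)]" for i
            by (simp add: cnt_def)
          ultimately show ?thesis using b1 b2
            by (intro exI[of _ "[(u,b1),(v,b2)]"]) auto
        qed
      qed
    qed
  qed
qed

lemma endpts:
  assumes "connection \<Omega> a p q P Q" "j < q"
  shows "P j \<noteq> Q j" "P j \<in> closure \<Omega>" "Q j \<in> closure \<Omega>"
    "P j \<in> frontier \<Omega> \<or> (\<exists>i<p. P j = a i)" "Q j \<in> frontier \<Omega> \<or> (\<exists>i<p. Q j = a i)"
    "(\<exists>i<p. P j = a i) \<or> (\<exists>i<p. Q j = a i)"
proof -
  have h: "P j \<noteq> Q j \<and> closed_segment (P j) (Q j) \<subseteq> closure \<Omega> \<and>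
        ((\<exists>i<p. \<exists>i'<p. {P j, Q j} = {a i, a i'}) \<or> (\<exists>i<p. \<exists>b\<in>frontier \<Omega>. {P j, Q j} = {a i, b}))"
    using assms unfolding connection_def by blast
  then show "P j \<noteq> Q j" by blast
  show "P j \<in> closure \<Omega>" "Q j \<in> closure \<Omega>" using h ends_in_segment by blast+
  show "P j \<in> frontier \<Omega> \<or> (\<exists>i<p. P j = a i)" "Q j \<in> frontier \<Omega> \<or> (\<exists>i<p. Q j = a i)"
       "(\<exists>i<p. P j = a i) \<or> (\<exists>i<p. Q j = a i)"
    using h by (auto simp: doubleton_eq_iff)
qed

lemma card_two:
  assumes "j \<noteq> k" "P j \<noteq> Q j" "P k \<noteq> Q k"
  shows "card {m\<in>{j,k}. x \<in> {P m, Q m}} = ind x (P j) + ind x (Q j) + ind x (P k) + ind x (Q k)"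
proof -
  have "{m\<in>{j,k}. x \<in> {P m, Q m}} = (if x \<in> {P j, Q j} then {j} else {}) \<union> (if x \<in> {P k, Q k} then {k} else {})"
    by auto
  moreover have "card ((if x \<in> {P j, Q j} then {j} else {}) \<union> (if x \<in> {P k, Q k} then {k} else {}))
     = (if x \<in> {P j, Q j} then 1 else 0) + (if x \<in> {P k, Q k} then 1 else 0)"
    using assms(1) by auto
  moreover have "(if x \<in> {P j, Q j} then 1 else 0) = ind x (P j) + ind x (Q j)"
    using assms(2) by (auto simp: ind_def)
  moreover have "(if x \<in> {P k, Q k} then 1 else 0) = ind x (P k) + ind x (Q k)"
    using assms(3) by (auto simp: ind_def)
  ultimately show ?thesis by simp
qed

lemma pair_surg:
  assumes mc: "minimal_connection \<Omega> a p q P Q" and oO: "open \<Omega>" and aO: "\<forall>i<p. a i \<in> \<Omega>"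
    and jk: "j < q" "k < q" "j \<noteq> k"
    and mem: "u1 \<in> {P j, Q j, P k, Q k}" "v1 \<in> {P j, Q j, P k, Q k}" "u2 \<in> {P j, Q j, P k, Q k}" "v2 \<in> {P j, Q j, P k, Q k}"
    and indeq: "\<And>x. ind x u1 + ind x v1 + ind x u2 + ind x v2 = ind x (P j) + ind x (Q j) + ind x (P k) + ind x (Q k)"
  shows "dist (P j) (Q j) + dist (P k) (Q k) \<le> dist u1 v1 + dist u2 v2"
proof -
  have conn: "connection \<Omega> a p q P Q" using mc by (simp add: minimal_connection_def)
  note ej = endpts[OF conn jk(1)] and ek = endpts[OF conn jk(2)]
  have good: "x \<in> closure \<Omega> \<and> (x \<in> frontier \<Omega> \<or> (\<exists>i<p. x = a i))" if "x \<in> {P j, Q j, P k, Q k}" for x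
    using that ej ek by blast
  obtain N1 where N1: "\<forall>s\<in>set N1. validseg \<Omega> a p s" "sumd N1 \<le> dist u1 v1"
      "\<forall>i<p. even (cnt (a i) N1 + ind (a i) u1 + ind (a i) v1)"
    using link[OF oO aO] good[OF mem(1)] good[OF mem(2)] by blast
  obtain N2 where N2: "\<forall>s\<in>set N2. validseg \<Omega> a p s" "sumd N2 \<le> dist u2 v2"
      "\<forall>i<p. even (cnt (a i) N2 + ind (a i) u2 + ind (a i) v2)"
    using link[OF oO aO] good[OF mem(3)] good[OF mem(4)] by blast
  have "(\<Sum>m\<in>{j,k}. dist (P m) (Q m)) \<le> sumd (N1 @ N2)"
  proof (rule surgery[OF mc])
    show "{j, k} \<subseteq> {..<q}" using jk by auto
    show "\<forall>s\<in>set (N1 @ N2). validseg \<Omega> a p s" using N1 N2 by auto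
    show "\<forall>i<p. even (cnt (a i) (N1 @ N2) + card {m \<in> {j, k}. a i \<in> {P m, Q m}})"
    proof (intro allI impI)
      fix i assume i: "i < p"
      have "cnt (a i) (N1 @ N2) = cnt (a i) N1 + cnt (a i) N2" by (simp add: cnt_def)
      moreover have "card {m \<in> {j, k}. a i \<in> {P m, Q m}} = ind (a i) u1 + ind (a i) v1 + ind (a i) u2 + ind (a i) v2"
        using card_two[OF jk(3) ej(1) ek(1)] indeq by simp
      ultimately show "even (cnt (a i) (N1 @ N2) + card {m \<in> {j, k}. a i \<in> {P m, Q m}})"
        using N1(3) N2(3) i by auto
    qed
  qed
  moreover have "sumd (N1 @ N2) = sumd N1 + sumd N2" by (simp add: sumd_def)
  ultimately show ?thesis using N1(2) N2(2) jk(3) by simp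
qed

lemma single_surg:
  assumes mc: "minimal_connection \<Omega> a p q P Q" and j: "j < q"
    and v: "validseg \<Omega> a p (u, v)" and par: "\<forall>i<p. cnt (a i) [(u,v)] = card {m\<in>{j}. a i \<in> {P m, Q m}}"
  shows "dist (P j) (Q j) \<le> dist u v"
proof -
  have "(\<Sum>m\<in>{j}. dist (P m) (Q m)) \<le> sumd [(u,v)]"
    by (rule surgery[OF mc]) (use j v par in auto)
  then show ?thesis by (simp add: sumd_def)
qed

lemma norm2_vec2: "(norm (y::real^2))\<^sup>2 = (y$1)\<^sup>2 + (y$2)\<^sup>2"
  unfolding power2_norm_eq_inner by (simp add: inner_vec_def sum_2 power2_eq_square)

lemma inner_vec2: "inner (y::real^2) w = y$1 * w$1 + y$2 * w$2"
  by (simp add: inner_vec_def sum_2)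

lemma chart_contra:
  fixes w :: "real^2" and f :: "real \<Rightarrow> real"
  assumes w1: "norm w = 1" and m: "m > 0" and r: "r > 0" and h: "h > 0" and f0: "f 0 = 0"
    and fd: "(f has_real_derivative d) (at 0)"
    and H: "\<forall>y::real^2. \<bar>y$1\<bar> < r \<and> \<bar>y$2\<bar> < h \<and> y$2 \<le> f (y$1) \<longrightarrow> 2*m*\<bar>inner y w\<bar> \<le> (norm y)\<^sup>2"
  shows False
proof -
  have w2: "w$2 = 0"
  proof (rule ccontr)
    assume nz: "w$2 \<noteq> 0"
    define \<tau> where "\<tau> = min (h/2) (m * \<bar>w$2\<bar>)"
    have pw: "\<bar>w$2\<bar> > 0" using nz by simp
    have "\<tau> \<le> m * \<bar>w$2\<bar>" by (simp add: \<tau>_def)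
    moreover have "m * \<bar>w$2\<bar> < 2 * m * \<bar>w$2\<bar>" using m pw by simp
    ultimately have t3: "\<tau> < 2 * m * \<bar>w$2\<bar>" by linarith
    have "0 < \<tau>" "\<tau> < h" using h m pw by (auto simp: \<tau>_def)
    note \<tau> = this t3
    have "2*m*\<bar>inner (vector [0, -\<tau>]) w\<bar> \<le> (norm (vector [0, -\<tau>] :: real^2))\<^sup>2"
      using H[rule_format, of "vector [0, -\<tau>]"] \<tau> r f0 by auto
    then have "2*m*(\<tau> * \<bar>w$2\<bar>) \<le> \<tau>^2"
      using \<tau>(1) by (simp add: norm2_vec2 inner_vec2 abs_mult)
    then have "2*m*\<bar>w$2\<bar> \<le> \<tau>" using \<tau>(1) by (simp add: power2_eq_square)
    then show False using \<tau> by simp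
  qed
  have "(w$1)\<^sup>2 + (w$2)\<^sup>2 = 1" using w1 norm2_vec2[of w] by simp
  then have aw1: "\<bar>w$1\<bar> = 1" using w2 by (auto simp: power2_eq_1_iff)
  have lim: "((\<lambda>y. (f y - f 0) / (y - 0)) \<longlongrightarrow> d) (at 0)"
    using fd by (simp add: has_field_derivative_iff)
  have ev1: "\<forall>\<^sub>F y in at 0. dist ((f y - f 0) / (y - 0)) d < 1"
    using lim by (simp add: tendsto_iff)
  have "isCont f 0" using fd by (rule DERIV_isCont)
  then have "(f \<longlongrightarrow> 0) (at 0)" using f0 by (simp add: isCont_def)
  then have ev2: "\<forall>\<^sub>F y in at 0. dist (f y) 0 < h" using h by (simp add: tendsto_iff)
  obtain \<delta> where \<delta>: "\<delta> > 0" "\<And>y. y \<noteq> 0 \<Longrightarrow> dist y 0 < \<delta> \<Longrightarrow> dist ((f y - f 0) / (y - 0)) d < 1 \<and> dist (f y) 0 < h"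
    using eventually_conj[OF ev1 ev2] by (auto simp: eventually_at)
  define K where "K = 1 + (\<bar>d\<bar> + 1)^2"
  have K: "K > 0" by (simp add: K_def add_pos_nonneg)
  define s where "s = min (\<delta>/2) (min (r/2) (m/K))"
  have s: "0 < s" "s < \<delta>" "s < r" "s \<le> m/K" using \<delta> r m K by (auto simp: s_def)
  have q1: "\<bar>f s / s - d\<bar> < 1" and q2: "\<bar>f s\<bar> < h" using \<delta>(2)[of s] s f0 by (auto simp: dist_real_def)
  have "\<bar>f s\<bar> \<le> (\<bar>d\<bar> + 1) * s"
  proof -
    have "\<bar>f s / s\<bar> \<le> \<bar>d\<bar> + 1" using q1 by linarith
    then show ?thesis using s(1) by (simp add: abs_div divide_le_eq)
  qed
  then have fs2: "(f s)^2 \<le> ((\<bar>d\<bar> + 1) * s)^2"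
    by (metis abs_ge_zero power2_abs power_mono)
  have "2*m*\<bar>inner (vector [s, f s]) w\<bar> \<le> (norm (vector [s, f s] :: real^2))\<^sup>2"
    using H[rule_format, of "vector [s, f s]"] s q2 by auto
  then have "2 * m * s \<le> s^2 + (f s)^2"
    using s(1) w2 aw1 by (simp add: norm2_vec2 inner_vec2 abs_mult)
  also have "\<dots> \<le> K * s^2"
  proof -
    have "((\<bar>d\<bar> + 1) * s)^2 = (\<bar>d\<bar> + 1)^2 * s^2" by (simp only: power_mult_distrib)
    moreover have "K * s^2 = s^2 + (\<bar>d\<bar> + 1)^2 * s^2" by (simp add: K_def algebra_simps)
    ultimately show ?thesis using fs2 by linarith
  qed
  also have "\<dots> = (K * s) * s" by (simp add: power2_eq_square)
  also have "\<dots> \<le> m * s" using s K by (intro mult_right_mono) (auto simp: le_divide_eq mult.commute)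
  finally show False using s(1) m by simp
qed

lemma sq_expand: "(norm (y - s *\<^sub>R w))\<^sup>2 = (norm y)\<^sup>2 - 2 * s * inner y w + s\<^sup>2 * (norm w)\<^sup>2"
  for y w :: "'a::real_inner"
  by (simp only: power2_norm_eq_inner) (simp add: inner_diff_left inner_diff_right inner_commute power2_eq_square algebra_simps)

lemma sq_expand2: "(norm (y + s *\<^sub>R w))\<^sup>2 = (norm y)\<^sup>2 + 2 * s * inner y w + s\<^sup>2 * (norm w)\<^sup>2"
  for y w :: "'a::real_inner"
  by (simp only: power2_norm_eq_inner) (simp add: inner_add_left inner_add_right inner_commute power2_eq_square algebra_simps)

lemma tangent:
  assumes C2b: "C2_boundary \<Omega>" and cf: "c \<in> frontier \<Omega>" and Xc: "X \<noteq> c" and Yc: "Y \<noteq> c"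
    and cs: "c \<in> closed_segment X Y" and bX: "ball X (dist X c) \<subseteq> \<Omega>" and bY: "ball Y (dist Y c) \<subseteq> \<Omega>"
  shows False
proof -
  obtain R f rr hh where R: "orthogonal_transformation R" and fC: "C2_real f" and f0: "f 0 = 0"
    and rr: "rr > 0" and hh: "hh > 0"
    and chart: "\<forall>y::pt. \<bar>y$1\<bar> < rr \<and> \<bar>y$2\<bar> < hh \<longrightarrow> (c + R y \<in> \<Omega> \<longleftrightarrow> y$2 > f (y$1))"
    using C2b cf unfolding C2_boundary_def by blast
  obtain f' where fd: "\<forall>t. (f has_real_derivative f' t) (at t)" using fC unfolding C2_real_def by blast
  obtain t where t: "0 \<le> t" "t \<le> 1" "c = (1 - t) *\<^sub>R X + t *\<^sub>R Y" using cs by (auto simp: closed_segment_def)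
  have t0: "t \<noteq> 0" using t Xc by auto
  have t1: "t \<noteq> 1" using t Yc by auto
  define D where "D = norm (Y - X)"
  have XY: "X \<noteq> Y" using t Xc by auto
  then have D: "D > 0" by (simp add: D_def)
  define e where "e = (1/D) *\<^sub>R (Y - X)"
  have ne: "norm e = 1" using D by (simp add: e_def D_def)
  define \<rho> where "\<rho> = t * D"
  define \<sigma> where "\<sigma> = (1 - t) * D"
  have YX: "Y - X = D *\<^sub>R e" using D by (simp add: e_def)
  have Xe: "X = c - \<rho> *\<^sub>R e"
  proof -
    have "c - X = t *\<^sub>R (Y - X)" using t(3) by (simp add: algebra_simps)
    then show ?thesis unfolding \<rho>_def YX by (simp add: algebra_simps)
  qed
  have Ye: "Y = c + \<sigma> *\<^sub>R e"
  proof -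
    have "Y - c = (1 - t) *\<^sub>R (Y - X)" using t(3) by (simp add: algebra_simps)
    then show ?thesis unfolding \<sigma>_def YX by (simp add: algebra_simps)
  qed
  have \<rho>: "\<rho> > 0" using t t0 D by (simp add: \<rho>_def)
  have \<sigma>: "\<sigma> > 0" using t t1 D by (simp add: \<sigma>_def)
  have dXc: "dist X c = \<rho>" using Xe ne \<rho> by (simp add: dist_norm)
  have dYc: "dist Y c = \<sigma>" using Ye ne \<sigma> by (simp add: dist_norm)
  obtain w where w: "R w = e" using orthogonal_transformation_surj[OF R] by (metis surjD)
  have nw: "norm w = 1" using w ne orthogonal_transformation_norm[OF R] by metis
  define m where "m = min \<rho> \<sigma>"
  have m: "m > 0" using \<rho> \<sigma> by (simp add: m_def)
  have H: "\<forall>y::real^2. \<bar>y$1\<bar> < rr \<and> \<bar>y$2\<bar> < hh \<and> y$2 \<le> f (y$1) \<longrightarrow> 2*m*\<bar>inner y w\<bar> \<le> (norm y)\<^sup>2"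
  proof (intro allI impI)
    fix y :: "real^2"
    assume y: "\<bar>y$1\<bar> < rr \<and> \<bar>y$2\<bar> < hh \<and> y$2 \<le> f (y$1)"
    have zn: "c + R y \<notin> \<Omega>" using chart y by auto
    have lin: "linear R" using R by (simp add: orthogonal_transformation_linear)
    have "c + R y \<notin> ball Y \<sigma>" using zn bY dYc by auto
    then have "\<sigma> \<le> norm (c + R y - Y)" by (simp add: dist_norm norm_minus_commute)
    also have "c + R y - Y = R (y - \<sigma> *\<^sub>R w)"
      using Ye w lin by (simp add: linear_diff linear_cmul algebra_simps)
    also have "norm (R (y - \<sigma> *\<^sub>R w)) = norm (y - \<sigma> *\<^sub>R w)" using orthogonal_transformation_norm[OF R] by blast
    finally have "\<sigma>\<^sup>2 \<le> (norm (y - \<sigma> *\<^sub>R w))\<^sup>2" using \<sigma> by (simp add: power_mono)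
    then have A1: "2 * \<sigma> * inner y w \<le> (norm y)\<^sup>2" using nw by (simp add: sq_expand)
    have "c + R y \<notin> ball X \<rho>" using zn bX dXc by auto
    then have "\<rho> \<le> norm (c + R y - X)" by (simp add: dist_norm norm_minus_commute)
    also have "c + R y - X = R (y + \<rho> *\<^sub>R w)"
      using Xe w lin by (simp add: linear_diff linear_cmul linear_add algebra_simps)
    also have "norm (R (y + \<rho> *\<^sub>R w)) = norm (y + \<rho> *\<^sub>R w)" using orthogonal_transformation_norm[OF R] by blast
    finally have "\<rho>\<^sup>2 \<le> (norm (y + \<rho> *\<^sub>R w))\<^sup>2" using \<rho> by (simp add: power_mono)
    then have A2: "- 2 * \<rho> * inner y w \<le> (norm y)\<^sup>2" using nw by (simp add: sq_expand2)
    show "2*m*\<bar>inner y w\<bar> \<le> (norm y)\<^sup>2"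
    proof (cases "inner y w \<ge> 0")
      case True
      then have "m * inner y w \<le> \<sigma> * inner y w" by (simp add: m_def mult_right_mono)
      moreover have "2*m*\<bar>inner y w\<bar> = 2 * (m * inner y w)" using True by simp
      ultimately show ?thesis using A1 by linarith
    next
      case False
      then have "m * (- inner y w) \<le> \<rho> * (- inner y w)" by (simp add: m_def mult_right_mono)
      moreover have "2*m*\<bar>inner y w\<bar> = 2 * (m * (- inner y w))" using False by simp
      ultimately show ?thesis using A2 by linarith
    qed
  qed
  show False using chart_contra[OF nw m rr hh f0 _ H] fd by blast
qed

lemma ind_pair: "{P, Q} = {c, X} \<Longrightarrow> P \<noteq> Q \<Longrightarrow> ind x P + ind x Q = ind x c + ind x X"
  by (auto simp: doubleton_eq_iff ind_def)

lemma seg_of_dist: "dist a b = dist a x + dist x b \<Longrightarrow> x \<in> closed_segment a b"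
  for a b x :: "'a::euclidean_space"
  using between between_mem_segment by blast

lemma ballO:
  assumes mc: "minimal_connection \<Omega> a p q P Q" and oO: "open \<Omega>" and aO: "\<forall>i<p. a i \<in> \<Omega>"
    and j: "j < q" and e: "{P j, Q j} = {c, X}" and cf: "c \<in> frontier \<Omega>"
  shows "ball X (dist X c) \<subseteq> \<Omega>"
proof
  fix y assume y: "y \<in> ball X (dist X c)"
  show "y \<in> \<Omega>"
  proof (rule ccontr)
    assume yn: "y \<notin> \<Omega>"
    have conn: "connection \<Omega> a p q P Q" using mc by (simp add: minimal_connection_def)
    note ej = endpts[OF conn j]
    have cn: "c \<notin> \<Omega>" using cf oO frontier_open_disj by blast
    have "\<exists>i<p. X = a i" using ej(6) e aO cn by (auto simp: doubleton_eq_iff)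
    then obtain i0 where i0: "i0 < p" "X = a i0" by blast
    obtain b where b: "validseg \<Omega> a p (X, b)" "dist X b \<le> dist X y" "\<forall>i<p. cnt (a i) [(X,b)] = ind (a i) X"
      using link_half[OF oO aO i0 yn] by blast
    have "\<forall>i<p. cnt (a i) [(X,b)] = card {m\<in>{j}. a i \<in> {P m, Q m}}"
    proof (intro allI impI)
      fix i assume i: "i < p"
      have "a i \<noteq> c" using aO i cn by auto
      have "{m\<in>{j}. a i \<in> {P m, Q m}} = (if a i \<in> {P j, Q j} then {j} else {})" by auto
      moreover have "a i \<in> {P j, Q j} \<longleftrightarrow> a i = X" using e \<open>a i \<noteq> c\<close> by auto
      ultimately have "card {m\<in>{j}. a i \<in> {P m, Q m}} = ind (a i) X" by (simp add: ind_def)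
      then show "cnt (a i) [(X,b)] = card {m\<in>{j}. a i \<in> {P m, Q m}}" using b(3) i by simp
    qed
    then have "dist (P j) (Q j) \<le> dist X b" using single_surg[OF mc j b(1)] by blast
    moreover have "dist (P j) (Q j) = dist X c" using e by (auto simp: doubleton_eq_iff dist_commute)
    moreover have "dist X y < dist X c" using y by simp
    ultimately show False using b(2) by linarith
  qed
qed

lemma degen:
  assumes mc: "minimal_connection \<Omega> a p q P Q" and oO: "open \<Omega>" and aO: "\<forall>i<p. a i \<in> \<Omega>"
    and C2b: "C2_boundary \<Omega>"
    and jk: "j < q" "k < q" "j \<noteq> k" and ej: "{P j, Q j} = {c, X}" and ek: "{P k, Q k} = {c, Y}"
    and cs: "c \<in> closed_segment X Y"
  shows False
proof -
  have conn: "connection \<Omega> a p q P Q" using mc by (simp add: minimal_connection_def)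
  note epj = endpts[OF conn jk(1)] and epk = endpts[OF conn jk(2)]
  have Xc: "X \<noteq> c" using ej epj(1) by (auto simp: doubleton_eq_iff)
  have Yc: "Y \<noteq> c" using ek epk(1) by (auto simp: doubleton_eq_iff)
  have ccl: "c \<in> closure \<Omega>" using ej epj(2,3) by (auto simp: doubleton_eq_iff)
  show False
  proof (cases "c \<in> \<Omega>")
    case False
    then have cf: "c \<in> frontier \<Omega>" using ccl oO by (simp add: frontier_def interior_open)
    show False
      using tangent[OF C2b cf Xc Yc cs ballO[OF mc oO aO jk(1) ej cf] ballO[OF mc oO aO jk(2) ek cf]] .
  next
    case True
    have "c \<in> frontier \<Omega> \<or> (\<exists>i<p. c = a i)" using ej epj(4,5) by (auto simp: doubleton_eq_iff)
    then obtain i0 where i0: "i0 < p" "c = a i0" using True oO frontier_open_disj by blast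
    define S where "S = {m. m < q \<and> a i0 \<in> {P m, Q m}}"
    have oddS: "odd (card S)" using conn i0 by (simp add: connection_def S_def)
    have jkS: "j \<in> S" "k \<in> S" using ej ek jk i0 by (auto simp: S_def)
    have "\<exists>m\<in>S. m \<noteq> j \<and> m \<noteq> k"
    proof (rule ccontr)
      assume "\<not> ?thesis"
      then have "S = {j, k}" using jkS by auto
      then show False using oddS jk(3) by simp
    qed
    then obtain m where m: "m < q" "c \<in> {P m, Q m}" "m \<noteq> j" "m \<noteq> k" using i0 by (auto simp: S_def)
    define Z where "Z = (if P m = c then Q m else P m)"
    have epm: "P m \<noteq> Q m" using endpts(1)[OF conn m(1)] .
    have em: "{P m, Q m} = {c, Z}" using m(2) epm by (auto simp: Z_def)
    have Zc: "Z \<noteq> c" using m(2) epm by (auto simp: Z_def)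
    have memj: "x \<in> {c, X} \<Longrightarrow> x \<in> {P j, Q j, P m, Q m}" for x using ej by auto
    have memj2: "x \<in> {c, Z} \<Longrightarrow> x \<in> {P j, Q j, P m, Q m}" for x using em by auto
    have "dist (P j) (Q j) + dist (P m) (Q m) \<le> dist c c + dist X Z"
      by (rule pair_surg[OF mc oO aO jk(1) m(1) m(3)[symmetric]])
         (use memj memj2 ind_pair[OF ej epj(1)] ind_pair[OF em epm] in auto)
    moreover have "dist (P j) (Q j) = dist X c" using ej by (auto simp: doubleton_eq_iff dist_commute)
    moreover have "dist (P m) (Q m) = dist c Z" using em by (auto simp: doubleton_eq_iff dist_commute)
    ultimately have "dist X Z = dist X c + dist c Z" using dist_triangle[of X Z c] by simp
    then have c1: "c \<in> closed_segment X Z" by (rule seg_of_dist)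
    have memk: "x \<in> {c, Y} \<Longrightarrow> x \<in> {P k, Q k, P m, Q m}" for x using ek by auto
    have memk2: "x \<in> {c, Z} \<Longrightarrow> x \<in> {P k, Q k, P m, Q m}" for x using em by auto
    have "dist (P k) (Q k) + dist (P m) (Q m) \<le> dist c c + dist Y Z"
      by (rule pair_surg[OF mc oO aO jk(2) m(1) m(4)[symmetric]])
         (use memk memk2 ind_pair[OF ek epk(1)] ind_pair[OF em epm] in auto)
    moreover have "dist (P k) (Q k) = dist Y c" using ek by (auto simp: doubleton_eq_iff dist_commute)
    moreover have "dist (P m) (Q m) = dist c Z" using em by (auto simp: doubleton_eq_iff dist_commute)
    ultimately have "dist Y Z = dist Y c + dist c Z" using dist_triangle[of Y Z c] by simp
    then have c2: "c \<in> closed_segment Y Z" by (rule seg_of_dist)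
    have "c = X \<or> c = Y \<or> c = Z" using T3[OF cs c1 c2] .
    then show False using Xc Yc Zc by auto
  qed
qed

lemma seg_disjoint:
  assumes mc: "minimal_connection \<Omega> a p q P Q" and oO: "open \<Omega>" and aO: "\<forall>i<p. a i \<in> \<Omega>"
    and C2b: "C2_boundary \<Omega>" and jk: "j < q" "k < q" "j \<noteq> k"
  shows "closed_segment (P j) (Q j) \<inter> closed_segment (P k) (Q k) = {}"
proof (rule ccontr)
  assume "closed_segment (P j) (Q j) \<inter> closed_segment (P k) (Q k) \<noteq> {}"
  then obtain x where xj: "x \<in> closed_segment (P j) (Q j)" and xk: "x \<in> closed_segment (P k) (Q k)" by blast
  have conn: "connection \<Omega> a p q P Q" using mc by (simp add: minimal_connection_def)
  note epj = endpts[OF conn jk(1)] and epk = endpts[OF conn jk(2)]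
  have s1: "dist (P j) (Q j) + dist (P k) (Q k) \<le> dist (P j) (P k) + dist (Q j) (Q k)"
    by (rule pair_surg[OF mc oO aO jk]) (auto simp: ind_def)
  have s2: "dist (P j) (Q j) + dist (P k) (Q k) \<le> dist (P j) (Q k) + dist (Q j) (P k)"
    by (rule pair_surg[OF mc oO aO jk]) (auto simp: ind_def)
  have ej: "dist (P j) (Q j) = dist (P j) x + dist x (Q j)" using xj by (metis between between_mem_segment)
  have ek: "dist (P k) (Q k) = dist (P k) x + dist x (Q k)" using xk by (metis between between_mem_segment)
  have t1: "dist (P j) (P k) \<le> dist (P j) x + dist x (P k)" by (rule dist_triangle)
  have t2: "dist (Q j) (Q k) \<le> dist (Q j) x + dist x (Q k)" by (rule dist_triangle)
  have t3: "dist (P j) (Q k) \<le> dist (P j) x + dist x (Q k)" by (rule dist_triangle)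
  have t4: "dist (Q j) (P k) \<le> dist (Q j) x + dist x (P k)" by (rule dist_triangle)
  have d1: "x \<in> closed_segment (P j) (P k)" by (rule seg_of_dist) (use s1 ej ek t1 t2 dist_commute[of x "Q j"] dist_commute[of x "P k"] dist_commute[of x "P j"] dist_commute[of x "Q k"] in linarith)
  have d2: "x \<in> closed_segment (Q j) (Q k)" by (rule seg_of_dist) (use s1 ej ek t1 t2 dist_commute[of x "Q j"] dist_commute[of x "P k"] dist_commute[of x "P j"] dist_commute[of x "Q k"] in linarith)
  have d3: "x \<in> closed_segment (P j) (Q k)" by (rule seg_of_dist) (use s2 ej ek t3 t4 dist_commute[of x "Q j"] dist_commute[of x "P k"] dist_commute[of x "P j"] dist_commute[of x "Q k"] in linarith)
  have d4: "x \<in> closed_segment (Q j) (P k)" by (rule seg_of_dist) (use s2 ej ek t3 t4 dist_commute[of x "Q j"] dist_commute[of x "P k"] dist_commute[of x "P j"] dist_commute[of x "Q k"] in linarith)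
  have r1: "x = P j \<or> x = Q j \<or> x = P k" using T3[OF xj d1 d4] .
  have r2: "x = P j \<or> x = Q j \<or> x = Q k" using T3[OF xj d3 d2] .
  have r3: "x = P k \<or> x = Q k \<or> x = P j" using T3[OF xk d1[unfolded closed_segment_commute[of "P j"]] d3[unfolded closed_segment_commute[of "P j"]]] .
  have r4: "x = P k \<or> x = Q k \<or> x = Q j" using T3[OF xk d4[unfolded closed_segment_commute[of "Q j"]] d2[unfolded closed_segment_commute[of "Q j"]]] .
  have xa: "x = P j \<or> x = Q j" using r1 r2 epk(1) by auto
  have xb: "x = P k \<or> x = Q k" using r3 r4 epj(1) by auto
  show False
  proof -
    { assume h: "x = P j" "x = P k"
      have "False" by (rule degen[OF mc oO aO C2b jk, of x "Q j" "Q k"]) (use h d2 in auto) }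
    moreover
    { assume h: "x = P j" "x = Q k"
      have "False" by (rule degen[OF mc oO aO C2b jk, of x "Q j" "P k"]) (use h d4 in auto) }
    moreover
    { assume h: "x = Q j" "x = P k"
      have "False" by (rule degen[OF mc oO aO C2b jk, of x "P j" "Q k"]) (use h d3 in auto) }
    moreover
    { assume h: "x = Q j" "x = Q k"
      have "False" by (rule degen[OF mc oO aO C2b jk, of x "P j" "P k"]) (use h d1 in auto) }
    ultimately show False using xa xb by blast
  qed
qed

lemma cover_line:
  fixes K :: "pt set" and D :: "nat \<Rightarrow> pt set"
  assumes K: "connected K" "x \<in> K" "y \<in> K" and cov: "K \<subseteq> (\<Union>n. D n)" and bd: "\<And>n. bounded (D n)"
  shows "ennreal (dist x y) \<le> (\<Sum>n. ennreal (2 * diameter (D n)))"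
proof (cases "x = y")
  case True then show ?thesis by simp
next
  case False
  define d where "d = dist x y"
  have d: "d > 0" using False by (simp add: d_def)
  define v where "v = (1/d) *\<^sub>R (y - x)"
  define \<pi> where "\<pi> = (\<lambda>z. inner (z - x) v)"
  have nv: "norm v = 1" using d by (simp add: v_def d_def dist_norm norm_minus_commute)
  have lip: "\<bar>\<pi> z - \<pi> z'\<bar> \<le> dist z z'" for z z'
  proof -
    have "\<pi> z - \<pi> z' = inner (z - z') v" by (simp add: \<pi>_def inner_diff_left)
    then have "\<bar>\<pi> z - \<pi> z'\<bar> \<le> norm (z - z') * norm v" by (metis Cauchy_Schwarz_ineq2)
    then show ?thesis using nv by (simp add: dist_norm)
  qed
  have px: "\<pi> x = 0" by (simp add: \<pi>_def)
  have py: "\<pi> y = d"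
  proof -
    have "\<pi> y = (1/d) * inner (y - x) (y - x)" by (simp add: \<pi>_def v_def)
    also have "inner (y - x) (y - x) = d^2"
      by (simp add: d_def dist_norm power2_norm_eq_inner[symmetric] norm_minus_commute)
    finally show ?thesis using d by (simp add: power2_eq_square)
  qed
  have "continuous_on K \<pi>" unfolding \<pi>_def by (intro continuous_intros)
  then have "connected (\<pi> ` K)" using K(1) by (rule connected_continuous_image)
  then have "{0..d} \<subseteq> \<pi> ` K" using connected_contains_Icc[of "\<pi> ` K" 0 d] K px py by (metis image_eqI)
  define z where "z = (\<lambda>n. SOME w. w \<in> D n)"
  define I where "I = (\<lambda>n. if D n = {} then {} else {\<pi> (z n) - diameter (D n) .. \<pi> (z n) + diameter (D n)})"
  have DI: "\<pi> ` D n \<subseteq> I n" for n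
  proof (cases "D n = {}")
    case True then show ?thesis by (simp add: I_def)
  next
    case False
    then have zn: "z n \<in> D n" unfolding z_def by (simp add: some_in_eq)
    show ?thesis
    proof
      fix r assume "r \<in> \<pi> ` D n"
      then obtain w where w: "w \<in> D n" "r = \<pi> w" by blast
      have "\<bar>\<pi> w - \<pi> (z n)\<bar> \<le> diameter (D n)"
        using lip[of w "z n"] diameter_bounded_bound[OF bd w(1) zn] by linarith
      then show "r \<in> I n" using False w by (auto simp: I_def abs_le_iff)
    qed
  qed
  have Isets: "I n \<in> sets lborel" for n by (simp add: I_def)
  have mI: "emeasure lborel (I n) \<le> ennreal (2 * diameter (D n))" for n
  proof (cases "D n = {}")
    case True then show ?thesis by (simp add: I_def)
  next
    case False
    have "0 \<le> diameter (D n)" by (simp add: diameter_ge_0 bd)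
    then show ?thesis using False by (simp add: I_def)
  qed
  have "{0..d} \<subseteq> (\<Union>n. I n)"
  proof
    fix r assume "r \<in> {0..d}"
    then obtain w where w: "w \<in> K" "r = \<pi> w" using \<open>{0..d} \<subseteq> \<pi> ` K\<close> by blast
    then obtain n where "w \<in> D n" using cov by blast
    then have "r \<in> I n" using DI[of n] w(2) by blast
    then show "r \<in> (\<Union>n. I n)" by blast
  qed
  moreover have UI: "(\<Union>n. I n) \<in> sets lborel"
    by (rule sets.countable_UN) (use Isets in blast)
  ultimately have "emeasure lborel {0..d} \<le> emeasure lborel (\<Union>n. I n)"
    by (rule emeasure_mono)
  also have "\<dots> \<le> (\<Sum>n. emeasure lborel (I n))"
    by (rule emeasure_subadditive_countably) (use Isets in blast)
  also have "\<dots> \<le> (\<Sum>n. ennreal (2 * diameter (D n)))"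
    by (intro suminf_le mI) auto
  finally show ?thesis using d by (simp add: d_def)
qed

lemma sep_pos:
  fixes K :: "'k \<Rightarrow> pt set"
  assumes fin: "finite F" and comp: "\<forall>k\<in>F. compact (K k)" and ne: "\<forall>k\<in>F. K k \<noteq> {}"
    and disj: "\<forall>k\<in>F. \<forall>l\<in>F. k \<noteq> l \<longrightarrow> K k \<inter> K l = {}"
  shows "\<exists>\<rho>>0. \<forall>k\<in>F. \<forall>l\<in>F. k \<noteq> l \<longrightarrow> (\<forall>x\<in>K k. \<forall>y\<in>K l. \<rho> \<le> dist x y)"
proof -
  define M where "M = insert 1 ((\<lambda>(k,l). setdist (K k) (K l)) ` {(k,l). k \<in> F \<and> l \<in> F \<and> k \<noteq> l})"
  have finM: "finite M" unfolding M_def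
    by (intro finite_insert[THEN iffD2] finite_imageI finite_subset[OF _ finite_cartesian_product[OF fin fin]]) auto
  have posM: "\<forall>m\<in>M. m > 0"
  proof
    fix m assume "m \<in> M"
    then consider "m = 1" | k l where "k \<in> F" "l \<in> F" "k \<noteq> l" "m = setdist (K k) (K l)"
      unfolding M_def by auto
    then show "m > 0"
    proof cases
      case 1 then show ?thesis by simp
    next
      case 2
      have ck: "compact (K k)" and cl: "closed (K l)" using comp 2 compact_imp_closed by auto
      have "K k \<noteq> {}" "K l \<noteq> {}" "K k \<inter> K l = {}" using ne disj 2 by auto
      then have "setdist (K k) (K l) \<noteq> 0"
        using setdist_eq_0_compact_closed[OF ck cl] by auto
      then show ?thesis using 2 setdist_pos_le[of "K k" "K l"] by linarith
    qed
  qed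
  define \<rho> where "\<rho> = Min M"
  have "\<rho> \<in> M" using finM unfolding \<rho>_def M_def by (intro Min_in) auto
  then have "\<rho> > 0" using posM by blast
  moreover have "\<rho> \<le> dist x y" if "k \<in> F" "l \<in> F" "k \<noteq> l" "x \<in> K k" "y \<in> K l" for k l x y
  proof -
    have "setdist (K k) (K l) \<in> M" using that unfolding M_def by auto
    then have "\<rho> \<le> setdist (K k) (K l)" using finM by (simp add: \<rho>_def)
    also have "\<dots> \<le> dist x y" using that by (simp add: setdist_le_dist)
    finally show ?thesis .
  qed
  ultimately show ?thesis by blast
qed

lemma haus_lower:
  fixes K :: "'k \<Rightarrow> pt set"
  assumes fin: "finite F" and comp: "\<forall>k\<in>F. compact (K k)" and conn: "\<forall>k\<in>F. connected (K k)"
    and pts: "\<forall>k\<in>F. \<exists>x\<in>K k. \<exists>y\<in>K k. \<eta> \<le> dist x y"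
    and disj: "\<forall>k\<in>F. \<forall>l\<in>F. k \<noteq> l \<longrightarrow> K k \<inter> K l = {}"
    and sub: "\<forall>k\<in>F. K k \<subseteq> S" and \<eta>: "0 \<le> \<eta>"
  shows "ennreal (real (card F) * \<eta> / 2) \<le> hausdorff1 S"
proof -
  have ne: "\<forall>k\<in>F. K k \<noteq> {}" using pts by blast
  obtain \<rho> where \<rho>: "\<rho> > 0" and sep: "\<forall>k\<in>F. \<forall>l\<in>F. k \<noteq> l \<longrightarrow> (\<forall>x\<in>K k. \<forall>y\<in>K l. \<rho> \<le> dist x y)"
    using sep_pos[OF fin comp ne disj] by blast
  define c where "c = ennreal (real (card F) * \<eta> / 2)"
  have main: "c \<le> (\<Sum>n. ennreal (diameter (C n)))"
    if C: "S \<subseteq> (\<Union>n. C n)" "\<forall>n. bounded (C n) \<and> diameter (C n) \<le> \<rho>/2" for C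
  proof -
    define D where "D = (\<lambda>k n. if C n \<inter> K k \<noteq> {} then C n else {})"
    have bdD: "bounded (D k n)" for k n using C(2) by (simp add: D_def)
    have one: "ennreal \<eta> \<le> (\<Sum>n. ennreal (2 * diameter (D k n)))" if k: "k \<in> F" for k
    proof -
      obtain x y where xy: "x \<in> K k" "y \<in> K k" "\<eta> \<le> dist x y" using pts k by blast
      have "K k \<subseteq> (\<Union>n. D k n)"
      proof
        fix z assume z: "z \<in> K k"
        then have "z \<in> S" using sub k by blast
        then obtain n where "z \<in> C n" using C(1) by blast
        then show "z \<in> (\<Union>n. D k n)" using z by (auto simp: D_def)
      qed
      then have "ennreal (dist x y) \<le> (\<Sum>n. ennreal (2 * diameter (D k n)))"
        using cover_line[of "K k" x y "D k"] conn k xy bdD by blast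
      moreover have "ennreal \<eta> \<le> ennreal (dist x y)" using xy(3) by (simp add: ennreal_leI)
      ultimately show ?thesis by (rule order_trans[rotated])
    qed
    have pw: "(\<Sum>k\<in>F. ennreal (2 * diameter (D k n))) \<le> ennreal (2 * diameter (C n))" for n
    proof (cases "\<exists>k0\<in>F. C n \<inter> K k0 \<noteq> {}")
      case True
      then obtain k0 where k0: "k0 \<in> F" "C n \<inter> K k0 \<noteq> {}" by blast
      have z: "D l n = {}" if l: "l \<in> F" "l \<noteq> k0" for l
      proof (rule ccontr)
        assume "D l n \<noteq> {}"
        then obtain z' where z': "z' \<in> C n" "z' \<in> K l" by (auto simp: D_def split: if_splits)
        obtain z where z: "z \<in> C n" "z \<in> K k0" using k0 by blast
        have "dist z z' \<le> diameter (C n)" using diameter_bounded_bound C(2) z z' by blast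
        moreover have "\<rho> \<le> dist z z'" using sep k0(1) l z z' by metis
        moreover have "diameter (C n) \<le> \<rho>/2" using C(2) by blast
        ultimately show False using \<rho> by linarith
      qed
      have "(\<Sum>k\<in>F. ennreal (2 * diameter (D k n))) = ennreal (2 * diameter (D k0 n)) + (\<Sum>k\<in>F-{k0}. ennreal (2 * diameter (D k n)))"
        using fin k0(1) by (simp add: sum.remove)
      also have "(\<Sum>k\<in>F-{k0}. ennreal (2 * diameter (D k n))) = 0"
        using z by (intro sum.neutral) auto
      also have "D k0 n = C n" using k0 by (simp add: D_def)
      finally show ?thesis by simp
    next
      case False
      then have "D k n = {}" if "k \<in> F" for k using that by (auto simp: D_def)
      then have "(\<Sum>k\<in>F. ennreal (2 * diameter (D k n))) = 0" by (intro sum.neutral) auto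
      then show ?thesis by simp
    qed
    have "(\<Sum>k\<in>F. ennreal \<eta>) \<le> (\<Sum>k\<in>F. \<Sum>n. ennreal (2 * diameter (D k n)))"
      by (intro sum_mono one)
    also have "\<dots> = (\<Sum>n. \<Sum>k\<in>F. ennreal (2 * diameter (D k n)))"
      by (rule suminf_sum[symmetric]) auto
    also have "\<dots> \<le> (\<Sum>n. ennreal (2 * diameter (C n)))"
      by (intro suminf_le pw) auto
    also have "\<dots> = (\<Sum>n. 2 * ennreal (diameter (C n)))"
      by (rule suminf_cong) (simp add: ennreal_mult')
    also have "\<dots> = 2 * (\<Sum>n. ennreal (diameter (C n)))" by simp
    finally have A: "(\<Sum>k\<in>F. ennreal \<eta>) \<le> 2 * (\<Sum>n. ennreal (diameter (C n)))" .
    have "(\<Sum>k\<in>F. ennreal \<eta>) = ennreal (real (card F) * \<eta>)"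
      using \<eta> by (simp add: ennreal_mult ennreal_of_nat_eq_real_of_nat)
    also have "ennreal (real (card F) * \<eta>) = 2 * c"
    proof -
      have "ennreal (real (card F) * \<eta>) = ennreal (2 * (real (card F) * \<eta> / 2))" by simp
      also have "\<dots> = 2 * c" unfolding c_def by (subst ennreal_mult') auto
      finally show ?thesis .
    qed
    finally have "2 * c \<le> 2 * (\<Sum>n. ennreal (diameter (C n)))" using A by simp
    then show ?thesis by (subst (asm) ennreal_mult_le_mult_iff) auto
  qed
  have "c \<le> (INF C\<in>{C :: nat \<Rightarrow> pt set. S \<subseteq> (\<Union>n. C n) \<and> (\<forall>n. bounded (C n) \<and> diameter (C n) \<le> \<rho>/2)}.
        (\<Sum>n. ennreal (diameter (C n))))"
    by (rule INF_greatest) (use main in blast)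
  also have "\<dots> \<le> hausdorff1 S"
    unfolding hausdorff1_def by (rule SUP_upper2[of "\<rho>/2"]) (use \<rho> in auto)
  finally show ?thesis by (simp add: c_def)
qed

lemma ai_sub: "arc_interval U t \<subseteq> U"
  unfolding arc_interval_def using connected_component_subset by auto

lemma ai_01:
  assumes "0 \<in> U \<longleftrightarrow> 1 \<in> U"
  shows "0 \<in> arc_interval U t \<longleftrightarrow> 1 \<in> arc_interval U t"
proof -
  have a: "x \<in> connected_component_set U y \<Longrightarrow> x \<in> U" for x y using connected_component_subset by blast
  show ?thesis unfolding arc_interval_def using assms a by auto
qed

lemma cc_nowrap:
  assumes "0 \<notin> connected_component_set U s" "1 \<notin> connected_component_set U s"
  shows "connected_component_set U s \<inter> (connected_component_set U 0 \<union> connected_component_set U 1) = {}"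
proof -
  have "connected_component_set U s \<inter> connected_component_set U c = {}" if c: "c \<notin> connected_component_set U s" for c
  proof (rule ccontr)
    assume "connected_component_set U s \<inter> connected_component_set U c \<noteq> {}"
    then have "c \<in> U" "connected_component_set U s = connected_component_set U c"
      using connected_component_overlap by blast+
    then show False using c by simp
  qed
  then show ?thesis using assms by blast
qed

lemma ai_disj:
  shows "arc_interval U t = arc_interval U t' \<or> arc_interval U t \<inter> arc_interval U t' = {}"
proof -
  let ?C = "connected_component_set U"
  consider "(0 \<in> ?C t \<or> 1 \<in> ?C t) \<and> (0 \<in> ?C t' \<or> 1 \<in> ?C t')"
    | "\<not> (0 \<in> ?C t \<or> 1 \<in> ?C t) \<and> (0 \<in> ?C t' \<or> 1 \<in> ?C t')"
    | "(0 \<in> ?C t \<or> 1 \<in> ?C t) \<and> \<not> (0 \<in> ?C t' \<or> 1 \<in> ?C t')"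
    | "\<not> (0 \<in> ?C t \<or> 1 \<in> ?C t) \<and> \<not> (0 \<in> ?C t' \<or> 1 \<in> ?C t')" by blast
  then show ?thesis
  proof cases
    case 1 then show ?thesis unfolding arc_interval_def by simp
  next
    case 2 then show ?thesis unfolding arc_interval_def using cc_nowrap[of U t] by auto
  next
    case 3 then show ?thesis unfolding arc_interval_def using cc_nowrap[of U t'] by auto
  next
    case 4
    then show ?thesis unfolding arc_interval_def using connected_component_nonoverlap[of U t t'] by auto
  qed
qed

lemma join_conn:
  fixes g :: "real \<Rightarrow> pt"
  assumes cont: "continuous_on {0..1} g" and C: "connected C" "C \<subseteq> {0..1}" and xy: "x \<in> C" "y \<in> C"
  shows "\<exists>S. compact S \<and> S \<subseteq> C \<and> connected (g ` S) \<and> x \<in> S \<and> y \<in> S"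
proof -
  define S where "S = {min x y .. max x y}"
  have "S \<subseteq> C" unfolding S_def using connected_contains_Icc[OF C(1)] xy
    by (cases "x \<le> y") (auto simp: min_def max_def)
  moreover have "connected (g ` S)"
    using continuous_on_subset[OF cont] \<open>S \<subseteq> C\<close> C(2) unfolding S_def
    by (intro connected_continuous_image) auto
  ultimately show ?thesis by (intro exI[of _ S]) (auto simp: S_def)
qed

lemma join_wrap:
  fixes g :: "real \<Rightarrow> pt"
  assumes cont: "continuous_on {0..1} g" and g01: "g 0 = g 1" and Usub: "U \<subseteq> {0..1}"
    and x: "x \<in> connected_component_set U 0" and y: "y \<in> connected_component_set U 1"
  shows "\<exists>S. compact S \<and> S \<subseteq> connected_component_set U 0 \<union> connected_component_set U 1 \<and> connected (g ` S) \<and> x \<in> S \<and> y \<in> S"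
proof -
  let ?C = "connected_component_set U"
  have xU: "x \<in> U" using x connected_component_subset[of U 0] by (rule subsetD[rotated])
  have yU: "y \<in> U" using y connected_component_subset[of U 1] by (rule subsetD[rotated])
  have "0 \<in> U" using connected_component_in[of U 0 x] x by simp
  then have c0: "0 \<in> ?C 0" by simp
  have "1 \<in> U" using connected_component_in[of U 1 y] y by simp
  then have c1: "1 \<in> ?C 1" by simp
  have x01: "0 \<le> x" "x \<le> 1" and y01: "0 \<le> y" "y \<le> 1" using xU yU Usub by auto
  define S where "S = {0..x} \<union> {y..1}"
  have "{0..x} \<subseteq> ?C 0" using connected_contains_Icc[OF connected_connected_component c0 x] .
  moreover have "{y..1} \<subseteq> ?C 1" using connected_contains_Icc[OF connected_connected_component y c1] .
  ultimately have sub: "S \<subseteq> ?C 0 \<union> ?C 1" by (auto simp: S_def)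
  have g1: "connected (g ` {0..x})"
    by (intro connected_continuous_image continuous_on_subset[OF cont]) (use x01 in auto)
  have g2: "connected (g ` {y..1})"
    by (intro connected_continuous_image continuous_on_subset[OF cont]) (use y01 in auto)
  have "g 0 \<in> g ` {0..x}" using x01 by auto
  moreover have "g 0 \<in> g ` {y..1}" using y01 g01 by auto
  ultimately have "connected (g ` {0..x} \<union> g ` {y..1})" using g1 g2 by (intro connected_Un) auto
  then have "connected (g ` S)" by (simp add: S_def image_Un)
  moreover have "compact S" unfolding S_def by (intro compact_Un compact_Icc)
  ultimately show ?thesis using sub x01 y01 by (intro exI[of _ S]) (auto simp: S_def)
qed

lemma join_ai:
  fixes g :: "real \<Rightarrow> pt"
  assumes cont: "continuous_on {0..1} g" and g01: "g 0 = g 1" and Usub: "U \<subseteq> {0..1}"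
    and x: "x \<in> arc_interval U t" and y: "y \<in> arc_interval U t"
  shows "\<exists>S. compact S \<and> S \<subseteq> arc_interval U t \<and> connected (g ` S) \<and> x \<in> S \<and> y \<in> S"
proof -
  let ?C = "connected_component_set U"
  have Csub: "?C z \<subseteq> {0..1}" for z using connected_component_subset Usub by blast
  show ?thesis
  proof (cases "0 \<in> ?C t \<or> 1 \<in> ?C t")
    case False
    then have J: "arc_interval U t = ?C t" by (simp add: arc_interval_def)
    show ?thesis using join_conn[OF cont connected_connected_component Csub x[unfolded J] y[unfolded J]] unfolding J by blast
  next
    case True
    then have J: "arc_interval U t = ?C 0 \<union> ?C 1" by (simp add: arc_interval_def)
    consider "x \<in> ?C 0" "y \<in> ?C 0" | "x \<in> ?C 1" "y \<in> ?C 1" | "x \<in> ?C 0" "y \<in> ?C 1" | "x \<in> ?C 1" "y \<in> ?C 0"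
      using x y unfolding J by blast
    then show ?thesis
    proof cases
      case 1
      note h = this
      obtain S where "compact S \<and> S \<subseteq> ?C 0 \<and> connected (g ` S) \<and> x \<in> S \<and> y \<in> S"
        using join_conn[OF cont connected_connected_component Csub h(1) h(2)] by blast
      then show ?thesis unfolding J by blast
    next
      case 2
      note h = this
      obtain S where "compact S \<and> S \<subseteq> ?C 1 \<and> connected (g ` S) \<and> x \<in> S \<and> y \<in> S"
        using join_conn[OF cont connected_connected_component Csub h(1) h(2)] by blast
      then show ?thesis unfolding J by blast
    next
      case 3
      note h = this
      show ?thesis unfolding J using join_wrap[OF cont g01 Usub h(1) h(2)] by blast
    next
      case 4
      note h = this
      show ?thesis unfolding J using join_wrap[OF cont g01 Usub h(2) h(1)] by blast
    qed
  qed
qed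

lemma piece:
  fixes g :: "real \<Rightarrow> pt"
  assumes cont: "continuous_on {0..1} g" and g01: "g 0 = g 1" and Usub: "U \<subseteq> {0..1}"
    and a: "a \<in> closure (arc_interval U t)" and b: "b \<in> closure (arc_interval U t)"
    and d: "\<delta> \<le> dist (g a) (g b)" "0 < \<delta>"
  shows "\<exists>S. compact S \<and> S \<subseteq> arc_interval U t \<and> connected (g ` S) \<and> (\<exists>x\<in>g ` S. \<exists>y\<in>g ` S. \<delta>/2 \<le> dist x y)"
proof -
  let ?J = "arc_interval U t"
  have clJ: "closure ?J \<subseteq> {0..1}" using ai_sub Usub by (intro closure_minimal) auto
  have approx: "\<exists>c'\<in>?J. dist (g c') (g c) < \<delta>/4" if c: "c \<in> closure ?J" for c
  proof -
    have c01: "c \<in> {0..1}" using c clJ by blast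
    have cc: "\<forall>x\<in>{0..1}. \<forall>e>0. \<exists>d>0. \<forall>x'\<in>{0..1}. dist x' x < d \<longrightarrow> dist (g x') (g x) < e"
      using cont unfolding continuous_on_iff by blast
    have q4: "\<delta>/4 > 0" using d(2) by simp
    obtain e where e: "e > 0" "\<forall>x'\<in>{0..1}. dist x' c < e \<longrightarrow> dist (g x') (g c) < \<delta>/4"
      using cc c01 q4 by blast
    obtain c' where c': "c' \<in> ?J" "dist c' c < e" using c e(1) unfolding closure_approachable by blast
    have "c' \<in> {0..1}" using c'(1) ai_sub Usub by blast
    then show ?thesis using e c' by blast
  qed
  obtain a' where a': "a' \<in> ?J" "dist (g a') (g a) < \<delta>/4" using approx[OF a] by blast
  obtain b' where b': "b' \<in> ?J" "dist (g b') (g b) < \<delta>/4" using approx[OF b] by blast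
  have "dist (g a) (g b) \<le> dist (g a) (g a') + dist (g a') (g b') + dist (g b') (g b)"
    using dist_triangle[of "g a" "g b" "g a'"] dist_triangle[of "g a'" "g b" "g b'"] by linarith
  then have far: "\<delta>/2 \<le> dist (g a') (g b')" using a'(2) b'(2) d(1) by (simp add: dist_commute)
  obtain S where S: "compact S" "S \<subseteq> ?J" "connected (g ` S)" "a' \<in> S" "b' \<in> S"
    using join_ai[OF cont g01 Usub a'(1) b'(1)] by blast
  show ?thesis using S far by (intro exI[of _ S]) auto
qed

lemma img_disj:
  fixes g :: "real \<Rightarrow> pt"
  assumes inj: "inj_on g {0..<1}" and g01: "g 0 = g 1" and S: "S \<subseteq> J" "S' \<subseteq> J'" and JJ: "J \<inter> J' = {}"
    and J01: "J \<subseteq> {0..1}" "J' \<subseteq> {0..1}" and Z: "0 \<in> J \<longleftrightarrow> 1 \<in> J" "0 \<in> J' \<longleftrightarrow> 1 \<in> J'"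
  shows "g ` S \<inter> g ` S' = {}"
proof (rule ccontr)
  assume "g ` S \<inter> g ` S' \<noteq> {}"
  then obtain s s' where ss: "s \<in> S" "s' \<in> S'" "g s = g s'" by blast
  have sJ: "s \<in> J" and sJ': "s' \<in> J'" using ss S by auto
  have neq: "s \<noteq> s'" using sJ sJ' JJ by auto
  have r: "0 \<le> s" "s \<le> 1" "0 \<le> s'" "s' \<le> 1" using sJ sJ' J01 by auto
  show False
  proof (cases "s = 1")
    case True
    then have "0 \<in> J" using Z sJ by auto
    then have "0 \<notin> J'" "1 \<notin> J'" using JJ True sJ by auto
    then have "s' \<in> {0..<1}" "s' \<noteq> 0" using sJ' r by (auto, metis less_eq_real_def)
    moreover have "g s' = g 0" using ss True g01 by simp
    ultimately show False using inj by (metis atLeastLessThan_iff inj_onD order_refl zero_less_one)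
  next
    case s1: False
    show False
    proof (cases "s' = 1")
      case True
      then have "0 \<in> J'" using Z sJ' by auto
      then have "0 \<notin> J" "1 \<notin> J" using JJ True sJ' by auto
      then have "s \<in> {0..<1}" "s \<noteq> 0" using sJ r by (auto, metis less_eq_real_def)
      moreover have "g s = g 0" using ss True g01 by simp
      ultimately show False using inj by (metis atLeastLessThan_iff inj_onD order_refl zero_less_one)
    next
      case False
      then have "s \<in> {0..<1}" "s' \<in> {0..<1}" using s1 r by auto
      then show False using inj ss(3) neq by (meson inj_onD)
    qed
  qed
qed

lemma count_finite:
  assumes c: "c > 0" and M: "M < top" and H: "\<And>F. finite F \<Longrightarrow> F \<subseteq> X \<Longrightarrow> ennreal (real (card F) * c) \<le> M"
  shows "finite X"
proof (rule ccontr)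
  assume inf: "infinite X"
  obtain m where m: "M = ennreal m" "0 \<le> m" using M by (cases M) auto
  define N where "N = nat (ceiling (m / c)) + 1"
  have "m / c < real N" unfolding N_def by linarith
  then have Nc: "m < real N * c" using c by (simp add: divide_less_eq)
  obtain F where F: "finite F" "card F = N" "F \<subseteq> X" using infinite_arbitrarily_large[OF inf] by blast
  have "ennreal (real N * c) \<le> ennreal m" using H[OF F(1,3)] F(2) m by simp
  then have "real N * c \<le> m" using m(2) by simp
  then show False using Nc by simp
qed

theorem lemma1p12:
  fixes \<Omega> :: "(real^2) set" and a :: "nat \<Rightarrow> real^2" and p q :: nat
    and P Q :: "nat \<Rightarrow> real^2"
  assumes "bounded \<Omega>" and "simply_connected \<Omega>" and "C2_domain \<Omega>"
    and "inj_on a {..<p}" and "a ` {..<p} \<subseteq> \<Omega>"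
    and "minimal_connection \<Omega> a p q P Q"
  shows "\<forall>A I C \<gamma>. A \<subseteq> \<Omega> \<and> finite_perimeter A \<and> jordan_decomposition \<Omega> A I C \<gamma> \<longrightarrow>
           finite (essential_arcs \<Omega> q P Q I \<gamma>)"
proof -
  note bO = assms(1) and mc = assms(6)
  have oO: "open \<Omega>" and C2b: "C2_boundary \<Omega>" and neO: "\<Omega> \<noteq> {}" using assms(3) by (auto simp: C2_domain_def)
  have aO: "\<forall>i<p. a i \<in> \<Omega>" using assms(5) by auto
  define seg where "seg = (\<lambda>j. closed_segment (P j) (Q j))"
  have segdisj: "\<And>j k. j < q \<Longrightarrow> k < q \<Longrightarrow> j \<noteq> k \<Longrightarrow> seg j \<inter> seg k = {}"
    unfolding seg_def using seg_disjoint[OF mc oO aO C2b] by blast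
  have fr_ne: "frontier \<Omega> \<noteq> {}"
  proof -
    have "\<Omega> \<noteq> UNIV" using bO not_bounded_UNIV by blast
    then show ?thesis using neO frontier_eq_empty by blast
  qed
  have fr_comp: "compact (frontier \<Omega>)" using bO by (rule compact_frontier_bounded)
  have segc: "compact (seg j)" "seg j \<noteq> {}" for j by (auto simp: seg_def)
  obtain \<rho>1 where \<rho>1: "\<rho>1 > 0" "\<forall>j\<in>{..<q}. \<forall>k\<in>{..<q}. j \<noteq> k \<longrightarrow> (\<forall>x\<in>seg j. \<forall>y\<in>seg k. \<rho>1 \<le> dist x y)"
    using sep_pos[of "{..<q}" seg] segc segdisj by auto
  define K2 where "K2 = (\<lambda>z. case z of None \<Rightarrow> frontier \<Omega> | Some j \<Rightarrow> seg j)"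
  define F2 where "F2 = insert None (Some ` {j. j < q \<and> seg j \<inter> frontier \<Omega> = {}})"
  have "\<exists>\<rho>>0. \<forall>k\<in>F2. \<forall>l\<in>F2. k \<noteq> l \<longrightarrow> (\<forall>x\<in>K2 k. \<forall>y\<in>K2 l. \<rho> \<le> dist x y)"
  proof (rule sep_pos)
    show "finite F2" by (simp add: F2_def)
    show "\<forall>k\<in>F2. compact (K2 k)" using fr_comp segc by (auto simp: F2_def K2_def)
    show "\<forall>k\<in>F2. K2 k \<noteq> {}" using fr_ne segc by (auto simp: F2_def K2_def)
    show "\<forall>k\<in>F2. \<forall>l\<in>F2. k \<noteq> l \<longrightarrow> K2 k \<inter> K2 l = {}"
      using segdisj by (auto simp: F2_def K2_def)
  qed
  then obtain \<rho>2 where \<rho>2: "\<rho>2 > 0" "\<forall>k\<in>F2. \<forall>l\<in>F2. k \<noteq> l \<longrightarrow> (\<forall>x\<in>K2 k. \<forall>y\<in>K2 l. \<rho>2 \<le> dist x y)"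
    by blast
  define \<delta>0 where "\<delta>0 = min \<rho>1 \<rho>2"
  have \<delta>0: "\<delta>0 > 0" using \<rho>1 \<rho>2 by (simp add: \<delta>0_def)
  have ess: "\<exists>a b. a \<in> closure J - J \<and> b \<in> closure J - J \<and> \<delta>0 \<le> dist (g a) (g b)"
    if e: "essential_arc \<Omega> q P Q g J" for g J
  proof -
    obtain e1 e2 where e12: "arc_endpoints g J = {e1, e2}"
      and cs: "(\<exists>j<q. \<exists>k<q. seg j \<noteq> seg k \<and> e1 \<in> seg j \<and> e2 \<in> seg k) \<or>
               (e1 \<in> frontier \<Omega> \<and> (\<exists>j<q. e2 \<in> seg j \<and> seg j \<inter> frontier \<Omega> = {}))"
      using e unfolding essential_arc_def seg_def by blast
    have "\<delta>0 \<le> dist e1 e2"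
      using cs
    proof
      assume "\<exists>j<q. \<exists>k<q. seg j \<noteq> seg k \<and> e1 \<in> seg j \<and> e2 \<in> seg k"
      then obtain j k where jk: "j < q" "k < q" "seg j \<noteq> seg k" "e1 \<in> seg j" "e2 \<in> seg k" by blast
      then have "j \<noteq> k" by blast
      then have "\<rho>1 \<le> dist e1 e2" using \<rho>1(2) jk by blast
      then show ?thesis by (simp add: \<delta>0_def)
    next
      assume "e1 \<in> frontier \<Omega> \<and> (\<exists>j<q. e2 \<in> seg j \<and> seg j \<inter> frontier \<Omega> = {})"
      then obtain j where j: "e1 \<in> frontier \<Omega>" "j < q" "e2 \<in> seg j" "seg j \<inter> frontier \<Omega> = {}" by blast
      have "None \<in> F2" "Some j \<in> F2" using j by (auto simp: F2_def)
      then have "\<rho>2 \<le> dist e1 e2" using \<rho>2(2) j by (fastforce simp: K2_def)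
      then show ?thesis by (simp add: \<delta>0_def)
    qed
    moreover obtain a' where "a' \<in> closure J - J" "g a' = e1" using e12 unfolding arc_endpoints_def
      by (metis imageE insertI1)
    moreover obtain b' where "b' \<in> closure J - J" "g b' = e2" using e12 unfolding arc_endpoints_def
      by (metis imageE insertI1 insert_commute)
    ultimately show ?thesis by blast
  qed
  show ?thesis
  proof (intro allI impI)
    fix A I C \<gamma>
    assume hA: "A \<subseteq> \<Omega> \<and> finite_perimeter A \<and> jordan_decomposition \<Omega> A I C \<gamma>"
    have hj: "\<forall>i\<in>I. C i = \<gamma> i ` {0..1} \<and> \<gamma> i ` {0..1} \<subseteq> closure \<Omega> \<and>
            (\<exists>B. B-lipschitz_on {0..1} (\<gamma> i)) \<and> inj_on (\<gamma> i) {0..<1} \<and> \<gamma> i 0 = \<gamma> i 1"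
      and per: "perimeter A = (\<Sum>i. if i \<in> I then hausdorff1 (C i) else 0)"
      using hA unfolding jordan_decomposition_def by blast+
    have fp: "perimeter A < top" using hA unfolding finite_perimeter_def by simp
    define f where "f = (\<lambda>i. if i \<in> I then hausdorff1 (C i) else 0)"
    have cont: "continuous_on {0..1} (\<gamma> i)" if "i \<in> I" for i
      using hj that lipschitz_on_continuous_on by blast
    define U where "U = (\<lambda>i. arc_params \<Omega> q P Q (\<gamma> i))"
    have Usub: "U i \<subseteq> {0..1}" for i by (auto simp: U_def arc_params_def)
    have U01: "0 \<in> U i \<longleftrightarrow> 1 \<in> U i" if "i \<in> I" for i
      using hj that by (auto simp: U_def arc_params_def)
    define E where "E = (\<lambda>i. {J. \<exists>t\<in>U i. J = arc_interval (U i) t \<and> essential_arc \<Omega> q P Q (\<gamma> i) J})"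
    have subE: "essential_arcs \<Omega> q P Q I \<gamma> \<subseteq> Sigma I E"
      unfolding essential_arcs_def E_def U_def by auto
    have KC: "ennreal (real (card F) * (\<delta>0/4)) \<le> hausdorff1 (C i)"
      if i: "i \<in> I" and F: "finite F" "F \<subseteq> E i" for i F
    proof -
      have pc: "\<forall>J\<in>F. \<exists>S. compact S \<and> S \<subseteq> J \<and> connected (\<gamma> i ` S) \<and> (\<exists>x\<in>\<gamma> i ` S. \<exists>y\<in>\<gamma> i ` S. \<delta>0/2 \<le> dist x y)"
      proof
        fix J assume "J \<in> F"
        then obtain t where t: "t \<in> U i" "J = arc_interval (U i) t" "essential_arc \<Omega> q P Q (\<gamma> i) J"
          using F by (auto simp: E_def)
        obtain a' b' where ab: "a' \<in> closure J - J" "b' \<in> closure J - J" "\<delta>0 \<le> dist (\<gamma> i a') (\<gamma> i b')"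
          using ess[OF t(3)] by blast
        show "\<exists>S. compact S \<and> S \<subseteq> J \<and> connected (\<gamma> i ` S) \<and> (\<exists>x\<in>\<gamma> i ` S. \<exists>y\<in>\<gamma> i ` S. \<delta>0/2 \<le> dist x y)"
          using piece[OF cont[OF i] _ Usub[of i], of a' t b' \<delta>0] hj i ab t(2) \<delta>0 by auto
      qed
      then obtain SS where SS: "\<forall>J\<in>F. compact (SS J) \<and> SS J \<subseteq> J \<and> connected (\<gamma> i ` SS J) \<and>
           (\<exists>x\<in>\<gamma> i ` SS J. \<exists>y\<in>\<gamma> i ` SS J. \<delta>0/2 \<le> dist x y)"
        by metis
      have JU: "J \<subseteq> U i" if "J \<in> F" for J using that F ai_sub by (auto simp: E_def)
      have "ennreal (real (card F) * (\<delta>0/2) / 2) \<le> hausdorff1 (C i)"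
      proof (rule haus_lower[OF F(1)])
        show "\<forall>J\<in>F. compact (\<gamma> i ` SS J)"
        proof
          fix J assume J: "J \<in> F"
          have "SS J \<subseteq> {0..1}" using SS J JU[OF J] Usub by blast
          then show "compact (\<gamma> i ` SS J)"
            using SS J by (intro compact_continuous_image continuous_on_subset[OF cont[OF i]]) auto
        qed
        show "\<forall>J\<in>F. connected (\<gamma> i ` SS J)" using SS by blast
        show "\<forall>J\<in>F. \<exists>x\<in>\<gamma> i ` SS J. \<exists>y\<in>\<gamma> i ` SS J. \<delta>0/2 \<le> dist x y" using SS by blast
        show "\<forall>J\<in>F. \<forall>J'\<in>F. J \<noteq> J' \<longrightarrow> \<gamma> i ` SS J \<inter> \<gamma> i ` SS J' = {}"
        proof (intro ballI impI)
          fix J J' assume J: "J \<in> F" and J': "J' \<in> F" and ne: "J \<noteq> J'"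
          obtain t where t: "J = arc_interval (U i) t" using J F by (auto simp: E_def)
          obtain t' where t': "J' = arc_interval (U i) t'" using J' F by (auto simp: E_def)
          have JJ: "J \<inter> J' = {}" using ai_disj[of "U i" t t'] t t' ne by blast
          show "\<gamma> i ` SS J \<inter> \<gamma> i ` SS J' = {}"
          proof (rule img_disj)
            show "inj_on (\<gamma> i) {0..<1}" "\<gamma> i 0 = \<gamma> i 1" using hj i by auto
            show "SS J \<subseteq> J" "SS J' \<subseteq> J'" using SS J J' by auto
            show "J \<inter> J' = {}" by (rule JJ)
            show "J \<subseteq> {0..1}" "J' \<subseteq> {0..1}" using JU J J' Usub by blast+
            show "(0 \<in> J) = (1 \<in> J)" "(0 \<in> J') = (1 \<in> J')" using ai_01[OF U01[OF i]] t t' by auto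
          qed
        qed
        show "\<forall>J\<in>F. \<gamma> i ` SS J \<subseteq> C i"
        proof
          fix J assume J: "J \<in> F"
          have "SS J \<subseteq> {0..1}" using SS J JU[OF J] Usub by blast
          then show "\<gamma> i ` SS J \<subseteq> C i" using hj i by auto
        qed
        show "0 \<le> \<delta>0/2" using \<delta>0 by simp
      qed
      moreover have "real (card F) * (\<delta>0/2) / 2 = real (card F) * (\<delta>0/4)" by simp
      ultimately show ?thesis by simp
    qed
    have fle: "f i \<le> perimeter A" for i
    proof -
      have "sum f {i} \<le> suminf f" by (rule sum_le_suminf) auto
      then show ?thesis by (simp add: per f_def)
    qed
    have finE: "finite (E i)" if i: "i \<in> I" for i
    proof (rule count_finite)
      show "\<delta>0/4 > 0" using \<delta>0 by simp
      show "hausdorff1 (C i) < top" using fle[of i] fp i by (simp add: f_def)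
      show "ennreal (real (card F) * (\<delta>0/4)) \<le> hausdorff1 (C i)" if "finite F" "F \<subseteq> E i" for F
        using KC[OF i that] .
    qed
    define G where "G = {i\<in>I. E i \<noteq> {}}"
    have finG: "finite G"
    proof (rule count_finite)
      show "\<delta>0/4 > 0" using \<delta>0 by simp
      show "perimeter A < top" by (rule fp)
      show "ennreal (real (card F) * (\<delta>0/4)) \<le> perimeter A" if F: "finite F" "F \<subseteq> G" for F
      proof -
        have one: "ennreal (\<delta>0/4) \<le> f i" if "i \<in> F" for i
        proof -
          have iI: "i \<in> I" and "E i \<noteq> {}" using that F by (auto simp: G_def)
          then obtain J where J: "J \<in> E i" by blast
          have "ennreal (real (card {J}) * (\<delta>0/4)) \<le> hausdorff1 (C i)" using KC[OF iI, of "{J}"] J by blast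
          then have "ennreal (\<delta>0/4) \<le> hausdorff1 (C i)" by simp
          then show ?thesis using iI by (simp add: f_def)
        qed
        have "ennreal (real (card F) * (\<delta>0/4)) = ennreal (real (card F)) * ennreal (\<delta>0/4)"
          by (rule ennreal_mult') simp
        also have "\<dots> = (\<Sum>i\<in>F. ennreal (\<delta>0/4))"
          by (simp add: ennreal_of_nat_eq_real_of_nat)
        also have "\<dots> \<le> sum f F" by (intro sum_mono one)
        also have "\<dots> \<le> suminf f" by (rule sum_le_suminf) (auto simp: F)
        finally show ?thesis by (simp add: per f_def)
      qed
    qed
    have "essential_arcs \<Omega> q P Q I \<gamma> \<subseteq> Sigma G E"
      using subE by (auto simp: G_def)
    moreover have "finite (Sigma G E)" using finG finE by (intro finite_SigmaI) (auto simp: G_def)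
    ultimately show "finite (essential_arcs \<Omega> q P Q I \<gamma>)" by (rule finite_subset)
  qed
qed

end
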